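(* Let $W$ be a $k[G_m]$-module and suppose $0\to U\to M(W)\to V\to0$ is an exact sequence of $\mathrm{FI}_G$-modules in which $U$ is generated in degree $\le m$. Then $U$ and $V$ are both relatively projective.
   Context: Fix a commutative ring $k$ and a group $G$. $\mathrm{FI}_G$ is the category with objects $[n]$ ($n\ge0$) and morphisms $[n]\to[m]$ the pairs $(f,g)$ with $f$ injective and $g:[n]\to G$ a map of sets; composition $(f,g)\circ(f',g')=(f\circ f',h)$, $h(x)=g'(x)\,g(f'(x))$. $G_n=\mathfrak S_n\wr G=\mathrm{Aut}_{\mathrm{FI}_G}([n])$. An $\mathrm{FI}_G$-module is a functor $V:\mathrm{FI}_G\to\mathrm{Mod}_k$. For a $k[G_n]$-module $W$, $M(W)$ is the $\mathrm{FI}_G$-module with $M(W)_p=W\otimes_{k[G_n]}k[\mathrm{Hom}_{\mathrm{FI}_G}([n],[p])]$, morphisms acting by postcomposition; $M(n):=M(k[G_n])$; modules of the form $\bigoplus_n M(W_n)$ are relatively projective. $V$ is generated in degree $\le m$ if there is a surjection $\bigoplus M(n_i)\to V$ with all $n_i\le m$. *)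

theory Defs
  imports "HOL-Algebra.Module" "HOL-Algebra.Group"
begin

text \<open>A morphism [n] -> [m] of FI_G is a pair (f,g): f injective [n] -> [m],
  g : [n] -> G, where [n] = {0..<n}.  Both components are extensional
  (undefined outside [n]).\<close>

type_synonym 'g fimor = "(nat \<Rightarrow> nat) \<times> (nat \<Rightarrow> 'g)"

definition fimor :: "'g monoid \<Rightarrow> nat \<Rightarrow> nat \<Rightarrow> 'g fimor set" where
  "fimor G n m = {(f, g). f \<in> {..<n} \<rightarrow>\<^sub>E {..<m} \<and> inj_on f {..<n}
                          \<and> g \<in> {..<n} \<rightarrow>\<^sub>E carrier G}"

definition ficomp :: "'g monoid \<Rightarrow> nat \<Rightarrow> 'g fimor \<Rightarrow> 'g fimor \<Rightarrow> 'g fimor" where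
  "ficomp G n \<phi> \<psi> =
     (restrict (fst \<phi> \<circ> fst \<psi>) {..<n},
      restrict (\<lambda>x. snd \<psi> x \<otimes>\<^bsub>G\<^esub> snd \<phi> (fst \<psi> x)) {..<n})"

definition fiid :: "'g monoid \<Rightarrow> nat \<Rightarrow> 'g fimor" where
  "fiid G n = (restrict id {..<n}, restrict (\<lambda>_. \<one>\<^bsub>G\<^esub>) {..<n})"

definition linmap :: "'k ring \<Rightarrow> ('k, 'a) module \<Rightarrow> ('k, 'b) module \<Rightarrow> ('a \<Rightarrow> 'b) \<Rightarrow> bool" where
  "linmap R M N f \<longleftrightarrow> f \<in> carrier M \<rightarrow> carrier N
     \<and> (\<forall>x\<in>carrier M. \<forall>y\<in>carrier M. f (x \<oplus>\<^bsub>M\<^esub> y) = f x \<oplus>\<^bsub>N\<^esub> f y)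
     \<and> (\<forall>a\<in>carrier R. \<forall>x\<in>carrier M. f (a \<odot>\<^bsub>M\<^esub> x) = a \<odot>\<^bsub>N\<^esub> f x)"

definition selfmod :: "'k ring \<Rightarrow> ('k, 'k) module" where
  "selfmod R = \<lparr>carrier = carrier R, mult = mult R, one = one R, zero = zero R,
                add = add R, smult = (\<lambda>a x. a \<otimes>\<^bsub>R\<^esub> x)\<rparr>"

definition dsum :: "'k ring \<Rightarrow> 'i set \<Rightarrow> ('i \<Rightarrow> ('k, 'a) module) \<Rightarrow> ('k, 'i \<Rightarrow> 'a) module" where
  "dsum R I M = \<lparr>carrier = {F. (\<forall>i\<in>I. F i \<in> carrier (M i)) \<and> (\<forall>i. i \<notin> I \<longrightarrow> F i = undefined)
                          \<and> finite {i\<in>I. F i \<noteq> \<zero>\<^bsub>M i\<^esub>}},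
     mult = (\<lambda>_ _. undefined), one = undefined,
     zero = (\<lambda>i. if i \<in> I then \<zero>\<^bsub>M i\<^esub> else undefined),
     add = (\<lambda>F H i. if i \<in> I then F i \<oplus>\<^bsub>M i\<^esub> H i else undefined),
     smult = (\<lambda>a F i. if i \<in> I then a \<odot>\<^bsub>M i\<^esub> F i else undefined)\<rparr>"

definition dsingle :: "'i set \<Rightarrow> ('i \<Rightarrow> ('k, 'a) module) \<Rightarrow> 'i \<Rightarrow> 'a \<Rightarrow> 'i \<Rightarrow> 'a" where
  "dsingle I M j w = (\<lambda>i. if i \<in> I then (if i = j then w else \<zero>\<^bsub>M i\<^esub>) else undefined)"

definition kspan :: "'k ring \<Rightarrow> ('k, 'a) module \<Rightarrow> 'a set \<Rightarrow> 'a set" where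
  "kspan R M S = \<Inter>{N. submodule N R M \<and> S \<subseteq> N}"

definition qcls :: "('k, 'a) module \<Rightarrow> 'a set \<Rightarrow> 'a \<Rightarrow> 'a set" where
  "qcls M N x = {y \<in> carrier M. y \<ominus>\<^bsub>M\<^esub> x \<in> N}"

definition qrep :: "'a set \<Rightarrow> 'a" where
  "qrep A = (SOME x. x \<in> A)"

definition quotmod :: "('k, 'a) module \<Rightarrow> 'a set \<Rightarrow> ('k, 'a set) module" where
  "quotmod M N = \<lparr>carrier = qcls M N ` carrier M,
     mult = (\<lambda>_ _. undefined), one = undefined,
     zero = qcls M N \<zero>\<^bsub>M\<^esub>,
     add = (\<lambda>A B. qcls M N (qrep A \<oplus>\<^bsub>M\<^esub> qrep B)),
     smult = (\<lambda>a A. qcls M N (a \<odot>\<^bsub>M\<^esub> qrep A))\<rparr>"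

record ('k, 'g, 'a) figmod =
  Obj :: "nat \<Rightarrow> ('k, 'a) module"
  Act :: "nat \<Rightarrow> nat \<Rightarrow> 'g fimor \<Rightarrow> 'a \<Rightarrow> 'a"

definition fig_module :: "'k ring \<Rightarrow> 'g monoid \<Rightarrow> ('k, 'g, 'a) figmod \<Rightarrow> bool" where
  "fig_module R G V \<longleftrightarrow>
     (\<forall>p. module R (Obj V p))
   \<and> (\<forall>p q. \<forall>\<phi>\<in>fimor G p q. linmap R (Obj V p) (Obj V q) (Act V p q \<phi>))
   \<and> (\<forall>p. \<forall>x\<in>carrier (Obj V p). Act V p p (fiid G p) x = x)
   \<and> (\<forall>n m p. \<forall>\<psi>\<in>fimor G n m. \<forall>\<phi>\<in>fimor G m p. \<forall>x\<in>carrier (Obj V n).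
        Act V n p (ficomp G n \<phi> \<psi>) x = Act V m p \<phi> (Act V n m \<psi> x))"

definition fig_morph :: "'k ring \<Rightarrow> 'g monoid \<Rightarrow> ('k, 'g, 'a) figmod \<Rightarrow> ('k, 'g, 'b) figmod
                          \<Rightarrow> (nat \<Rightarrow> 'a \<Rightarrow> 'b) \<Rightarrow> bool" where
  "fig_morph R G V V' \<eta> \<longleftrightarrow>
     (\<forall>p. linmap R (Obj V p) (Obj V' p) (\<eta> p))
   \<and> (\<forall>p q. \<forall>\<phi>\<in>fimor G p q. \<forall>x\<in>carrier (Obj V p).
        \<eta> q (Act V p q \<phi> x) = Act V' p q \<phi> (\<eta> p x))"

definition fig_iso :: "'k ring \<Rightarrow> 'g monoid \<Rightarrow> ('k, 'g, 'a) figmod \<Rightarrow> ('k, 'g, 'b) figmod \<Rightarrow> bool" where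
  "fig_iso R G V V' \<longleftrightarrow> (\<exists>\<eta>. fig_morph R G V V' \<eta>
       \<and> (\<forall>p. bij_betw (\<eta> p) (carrier (Obj V p)) (carrier (Obj V' p))))"

definition dsumfig :: "'k ring \<Rightarrow> 'i set \<Rightarrow> ('i \<Rightarrow> ('k, 'g, 'a) figmod) \<Rightarrow> ('k, 'g, 'i \<Rightarrow> 'a) figmod" where
  "dsumfig R I M = \<lparr>Obj = (\<lambda>p. dsum R I (\<lambda>i. Obj (M i) p)),
     Act = (\<lambda>p q \<phi> F i. if i \<in> I then Act (M i) p q \<phi> (F i) else undefined)\<rparr>"

text \<open>A k[G_n]-module, G_n = Aut([n]) = fimor G n n, is a k-module W together with a
  k-linear left action rho of the group G_n.\<close>
definition grp_mod :: "'k ring \<Rightarrow> 'g monoid \<Rightarrow> nat \<Rightarrow> ('k, 'w) module \<Rightarrow> ('g fimor \<Rightarrow> 'w \<Rightarrow> 'w) \<Rightarrow> bool" where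
  "grp_mod R G n W \<rho> \<longleftrightarrow> module R W
     \<and> (\<forall>\<sigma>\<in>fimor G n n. linmap R W W (\<rho> \<sigma>))
     \<and> (\<forall>w\<in>carrier W. \<rho> (fiid G n) w = w)
     \<and> (\<forall>\<sigma>\<in>fimor G n n. \<forall>\<tau>\<in>fimor G n n. \<forall>w\<in>carrier W.
          \<rho> (ficomp G n \<sigma> \<tau>) w = \<rho> \<sigma> (\<rho> \<tau> w))"

text \<open>W (x)_k k[Hom([n],[p])], realised as the direct sum of copies of W indexed by Hom([n],[p]).\<close>
definition Mpre :: "'k ring \<Rightarrow> 'g monoid \<Rightarrow> nat \<Rightarrow> ('k, 'w) module \<Rightarrow> nat \<Rightarrow> ('k, 'g fimor \<Rightarrow> 'w) module" where
  "Mpre R G n W p = dsum R (fimor G n p) (\<lambda>_. W)"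

text \<open>Relations making the tensor product balanced over k[G_n]:
  (phi o sigma) (x) w  ~  phi (x) (sigma w).\<close>
definition Mrel :: "'k ring \<Rightarrow> 'g monoid \<Rightarrow> nat \<Rightarrow> ('k, 'w) module \<Rightarrow> ('g fimor \<Rightarrow> 'w \<Rightarrow> 'w)
                     \<Rightarrow> nat \<Rightarrow> ('g fimor \<Rightarrow> 'w) set" where
  "Mrel R G n W \<rho> p = kspan R (Mpre R G n W p)
     {dsingle (fimor G n p) (\<lambda>_. W) (ficomp G n \<phi> \<sigma>) w
        \<ominus>\<^bsub>Mpre R G n W p\<^esub> dsingle (fimor G n p) (\<lambda>_. W) \<phi> (\<rho> \<sigma> w)
      | \<phi> \<sigma> w. \<phi> \<in> fimor G n p \<and> \<sigma> \<in> fimor G n n \<and> w \<in> carrier W}"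

definition Mpush :: "'g monoid \<Rightarrow> nat \<Rightarrow> ('k, 'w) module \<Rightarrow> nat \<Rightarrow> nat \<Rightarrow> 'g fimor
                     \<Rightarrow> ('g fimor \<Rightarrow> 'w) \<Rightarrow> 'g fimor \<Rightarrow> 'w" where
  "Mpush G n W p q \<psi> F = (\<lambda>\<chi>. if \<chi> \<in> fimor G n q
      then finsum W F {\<phi> \<in> fimor G n p. ficomp G n \<psi> \<phi> = \<chi>} else undefined)"

text \<open>M(W)_p = W (x)_{k[G_n]} k[Hom_{FI_G}([n],[p])], morphisms acting by postcomposition.\<close>
definition MW :: "'k ring \<Rightarrow> 'g monoid \<Rightarrow> nat \<Rightarrow> ('k, 'w) module \<Rightarrow> ('g fimor \<Rightarrow> 'w \<Rightarrow> 'w)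
                  \<Rightarrow> ('k, 'g, ('g fimor \<Rightarrow> 'w) set) figmod" where
  "MW R G n W \<rho> = \<lparr>Obj = (\<lambda>p. quotmod (Mpre R G n W p) (Mrel R G n W \<rho> p)),
     Act = (\<lambda>p q \<psi> A. qcls (Mpre R G n W q) (Mrel R G n W \<rho> q)
                          (Mpush G n W p q \<psi> (qrep A)))\<rparr>"

text \<open>The group algebra k[G_n] as a left module over itself (left regular action).\<close>
definition kG :: "'k ring \<Rightarrow> 'g monoid \<Rightarrow> nat \<Rightarrow> ('k, 'g fimor \<Rightarrow> 'k) module" where
  "kG R G n = dsum R (fimor G n n) (\<lambda>_. selfmod R)"

definition kG_act :: "'k ring \<Rightarrow> 'g monoid \<Rightarrow> nat \<Rightarrow> 'g fimor \<Rightarrow> ('g fimor \<Rightarrow> 'k) \<Rightarrow> 'g fimor \<Rightarrow> 'k" where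
  "kG_act R G n \<sigma> F = Mpush G n (selfmod R) n n \<sigma> F"

definition Mn :: "'k ring \<Rightarrow> 'g monoid \<Rightarrow> nat
                  \<Rightarrow> ('k, 'g, ('g fimor \<Rightarrow> 'g fimor \<Rightarrow> 'k) set) figmod" where
  "Mn R G n = MW R G n (kG R G n) (kG_act R G n)"

text \<open>V is relatively projective if V is isomorphic to a direct sum over n of M(W_n),
  W_n a k[G_n]-module.  The element type of the W_n is supplied as a parameter.\<close>
definition rel_proj :: "'k ring \<Rightarrow> 'g monoid \<Rightarrow> 'w itself \<Rightarrow> ('k, 'g, 'a) figmod \<Rightarrow> bool" where
  "rel_proj R G T V \<longleftrightarrow> (\<exists>(Wf :: nat \<Rightarrow> ('k, 'w) module) \<rho>f.
      (\<forall>n. grp_mod R G n (Wf n) (\<rho>f n))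
    \<and> fig_iso R G (dsumfig R (UNIV :: nat set) (\<lambda>n. MW R G n (Wf n) (\<rho>f n))) V)"

text \<open>V is generated in degree \<le> m if there is a surjection from a direct sum
  of M(n_i), n_i \<le> m, onto V.  The index type of the family is a parameter.\<close>
definition gen_deg :: "'k ring \<Rightarrow> 'g monoid \<Rightarrow> 'i itself \<Rightarrow> ('k, 'g, 'a) figmod \<Rightarrow> nat \<Rightarrow> bool" where
  "gen_deg R G T V m \<longleftrightarrow> (\<exists>(I :: 'i set) nf \<eta>. (\<forall>i\<in>I. nf i \<le> m)
      \<and> fig_morph R G (dsumfig R I (\<lambda>i. Mn R G (nf i))) V \<eta>
      \<and> (\<forall>p. \<eta> p ` carrier (Obj (dsumfig R I (\<lambda>i. Mn R G (nf i))) p) = carrier (Obj V p)))"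

definition short_exact :: "'k ring \<Rightarrow> 'g monoid \<Rightarrow> ('k, 'g, 'a) figmod \<Rightarrow> ('k, 'g, 'b) figmod
     \<Rightarrow> ('k, 'g, 'c) figmod \<Rightarrow> (nat \<Rightarrow> 'a \<Rightarrow> 'b) \<Rightarrow> (nat \<Rightarrow> 'b \<Rightarrow> 'c) \<Rightarrow> bool" where
  "short_exact R G U M V \<iota> \<pi> \<longleftrightarrow> fig_morph R G U M \<iota> \<and> fig_morph R G M V \<pi>
     \<and> (\<forall>p. inj_on (\<iota> p) (carrier (Obj U p)))
     \<and> (\<forall>p. \<iota> p ` carrier (Obj U p) = {x \<in> carrier (Obj M p). \<pi> p x = \<zero>\<^bsub>Obj V p\<^esub>})
     \<and> (\<forall>p. \<pi> p ` carrier (Obj M p) = carrier (Obj V p))"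

end

theory Submission
  imports Defs
begin


lemma (in abelian_group) neg_zero_iff: "x \<in> carrier G \<Longrightarrow> (\<ominus> x = \<zero>) = (x = \<zero>)"
  using add.inv_eq_1_iff by simp

section \<open>Direct sums\<close>

definition supp :: "'i set \<Rightarrow> ('i \<Rightarrow> ('k, 'a) module) \<Rightarrow> ('i \<Rightarrow> 'a) \<Rightarrow> 'i set" where
  "supp I M F = {i\<in>I. F i \<noteq> \<zero>\<^bsub>M i\<^esub>}"

lemma dsum_carrier:
  "F \<in> carrier (dsum R I M) \<longleftrightarrow> (\<forall>i\<in>I. F i \<in> carrier (M i)) \<and> (\<forall>i. i \<notin> I \<longrightarrow> F i = undefined)
     \<and> finite (supp I M F)"
  by (simp add: dsum_def supp_def)

lemma dsum_zero: "\<zero>\<^bsub>dsum R I M\<^esub> = (\<lambda>i. if i \<in> I then \<zero>\<^bsub>M i\<^esub> else undefined)"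
  by (simp add: dsum_def)
lemma dsum_add: "x \<oplus>\<^bsub>dsum R I M\<^esub> y = (\<lambda>i. if i \<in> I then x i \<oplus>\<^bsub>M i\<^esub> y i else undefined)"
  by (simp add: dsum_def)
lemma dsum_smult: "a \<odot>\<^bsub>dsum R I M\<^esub> y = (\<lambda>i. if i \<in> I then a \<odot>\<^bsub>M i\<^esub> y i else undefined)"
  by (simp add: dsum_def)

lemma dsum_module:
  assumes R: "cring R" and M: "\<And>i. i \<in> I \<Longrightarrow> module R (M i)"
  shows "module R (dsum R I M)"
proof -
  have ag: "\<And>i. i \<in> I \<Longrightarrow> abelian_group (M i)" using M module.axioms(2) by blast
  note agE = abelian_groupE[OF ag]
  have cl: "x \<oplus>\<^bsub>dsum R I M\<^esub> y \<in> carrier (dsum R I M)"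
    if x: "x \<in> carrier (dsum R I M)" and y: "y \<in> carrier (dsum R I M)" for x y
  proof -
    have "supp I M (x \<oplus>\<^bsub>dsum R I M\<^esub> y) \<subseteq> supp I M x \<union> supp I M y"
      using x y by (auto simp: dsum_carrier dsum_add supp_def agE)
    then show ?thesis using x y by (auto simp: dsum_carrier dsum_add intro: agE finite_subset)
  qed
  have zc: "\<zero>\<^bsub>dsum R I M\<^esub> \<in> carrier (dsum R I M)"
    by (auto simp: dsum_carrier dsum_zero supp_def agE)
  have ag2: "abelian_group (dsum R I M)"
  proof (rule abelian_groupI)
    fix x assume x: "x \<in> carrier (dsum R I M)"
    define y where "y = (\<lambda>i. if i \<in> I then \<ominus>\<^bsub>M i\<^esub> x i else undefined)"
    have "supp I M y = supp I M x"
      using x ag by (auto simp: y_def dsum_carrier supp_def abelian_group.neg_zero_iff)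
    then have "y \<in> carrier (dsum R I M)"
      using x ag by (auto simp: y_def dsum_carrier abelian_group.a_inv_closed)
    moreover have "y \<oplus>\<^bsub>dsum R I M\<^esub> x = \<zero>\<^bsub>dsum R I M\<^esub>"
      using x ag by (auto simp: y_def dsum_carrier dsum_add dsum_zero abelian_group.l_neg)
    ultimately show "\<exists>y\<in>carrier (dsum R I M). y \<oplus>\<^bsub>dsum R I M\<^esub> x = \<zero>\<^bsub>dsum R I M\<^esub>" by blast
  next
    fix x y z assume "x \<in> carrier (dsum R I M)" "y \<in> carrier (dsum R I M)" "z \<in> carrier (dsum R I M)"
    then show "x \<oplus>\<^bsub>dsum R I M\<^esub> y \<oplus>\<^bsub>dsum R I M\<^esub> z = x \<oplus>\<^bsub>dsum R I M\<^esub> (y \<oplus>\<^bsub>dsum R I M\<^esub> z)"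
      by (simp add: dsum_add dsum_carrier agE(3) fun_eq_iff)
  next
    fix x y assume "x \<in> carrier (dsum R I M)" "y \<in> carrier (dsum R I M)"
    then show "x \<oplus>\<^bsub>dsum R I M\<^esub> y = y \<oplus>\<^bsub>dsum R I M\<^esub> x"
      by (simp add: dsum_add dsum_carrier agE(4) fun_eq_iff)
  next
    fix x assume "x \<in> carrier (dsum R I M)"
    then show "\<zero>\<^bsub>dsum R I M\<^esub> \<oplus>\<^bsub>dsum R I M\<^esub> x = x"
      by (auto simp add: dsum_add dsum_zero dsum_carrier agE(5) fun_eq_iff)
  qed (auto simp: cl zc)
  show ?thesis
  proof (rule moduleI[OF R ag2])
    fix a x assume a: "a \<in> carrier R" and x: "x \<in> carrier (dsum R I M)"
    have "supp I M (a \<odot>\<^bsub>dsum R I M\<^esub> x) \<subseteq> supp I M x"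
      using x a M module.smult_r_null by (fastforce simp: dsum_carrier dsum_smult supp_def)
    then show "a \<odot>\<^bsub>dsum R I M\<^esub> x \<in> carrier (dsum R I M)"
      using x a M by (auto simp: dsum_carrier dsum_smult intro: finite_subset module.smult_closed)
  next
    fix a b x assume "a \<in> carrier R" "b \<in> carrier R" "x \<in> carrier (dsum R I M)"
    then show "(a \<oplus>\<^bsub>R\<^esub> b) \<odot>\<^bsub>dsum R I M\<^esub> x = a \<odot>\<^bsub>dsum R I M\<^esub> x \<oplus>\<^bsub>dsum R I M\<^esub> b \<odot>\<^bsub>dsum R I M\<^esub> x"
      by (simp add: dsum_add dsum_smult dsum_carrier M module.smult_l_distr fun_eq_iff)
  next
    fix a x y assume "a \<in> carrier R" "x \<in> carrier (dsum R I M)" "y \<in> carrier (dsum R I M)"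
    then show "a \<odot>\<^bsub>dsum R I M\<^esub> (x \<oplus>\<^bsub>dsum R I M\<^esub> y) = a \<odot>\<^bsub>dsum R I M\<^esub> x \<oplus>\<^bsub>dsum R I M\<^esub> a \<odot>\<^bsub>dsum R I M\<^esub> y"
      by (auto simp add: dsum_add dsum_smult dsum_carrier fun_eq_iff intro!: module.smult_r_distr[OF M])
  next
    fix a b x assume "a \<in> carrier R" "b \<in> carrier R" "x \<in> carrier (dsum R I M)"
    then show "(a \<otimes>\<^bsub>R\<^esub> b) \<odot>\<^bsub>dsum R I M\<^esub> x = a \<odot>\<^bsub>dsum R I M\<^esub> (b \<odot>\<^bsub>dsum R I M\<^esub> x)"
      by (simp add: dsum_smult dsum_carrier M module.smult_assoc1 fun_eq_iff)
  next
    fix x assume "x \<in> carrier (dsum R I M)"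
    then show "\<one>\<^bsub>R\<^esub> \<odot>\<^bsub>dsum R I M\<^esub> x = x"
      by (auto simp add: dsum_smult dsum_carrier M module.smult_one fun_eq_iff)
  qed
qed


lemma linmapD:
  assumes "linmap R M N f"
  shows "\<And>x. x \<in> carrier M \<Longrightarrow> f x \<in> carrier N"
    and "\<And>x y. x \<in> carrier M \<Longrightarrow> y \<in> carrier M \<Longrightarrow> f (x \<oplus>\<^bsub>M\<^esub> y) = f x \<oplus>\<^bsub>N\<^esub> f y"
    and "\<And>a x. a \<in> carrier R \<Longrightarrow> x \<in> carrier M \<Longrightarrow> f (a \<odot>\<^bsub>M\<^esub> x) = a \<odot>\<^bsub>N\<^esub> f x"
  using assms by (auto simp: linmap_def)

lemma linmapI:
  assumes "\<And>x. x \<in> carrier M \<Longrightarrow> f x \<in> carrier N"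
    and "\<And>x y. x \<in> carrier M \<Longrightarrow> y \<in> carrier M \<Longrightarrow> f (x \<oplus>\<^bsub>M\<^esub> y) = f x \<oplus>\<^bsub>N\<^esub> f y"
    and "\<And>a x. a \<in> carrier R \<Longrightarrow> x \<in> carrier M \<Longrightarrow> f (a \<odot>\<^bsub>M\<^esub> x) = a \<odot>\<^bsub>N\<^esub> f x"
  shows "linmap R M N f"
  using assms by (auto simp: linmap_def)

lemma linmap_zero:
  assumes M: "module R M" and N: "module R N" and f: "linmap R M N f"
  shows "f \<zero>\<^bsub>M\<^esub> = \<zero>\<^bsub>N\<^esub>"
proof -
  interpret M: module R M by fact
  interpret N: module R N by fact
  have "f \<zero>\<^bsub>M\<^esub> = f (\<zero>\<^bsub>R\<^esub> \<odot>\<^bsub>M\<^esub> \<zero>\<^bsub>M\<^esub>)" by simp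
  also have "\<dots> = \<zero>\<^bsub>R\<^esub> \<odot>\<^bsub>N\<^esub> f \<zero>\<^bsub>M\<^esub>" by (rule linmapD(3)[OF f]) auto
  also have "\<dots> = \<zero>\<^bsub>N\<^esub>" using linmapD(1)[OF f] by simp
  finally show ?thesis .
qed

lemma linmap_neg:
  assumes M: "module R M" and N: "module R N" and f: "linmap R M N f" and x: "x \<in> carrier M"
  shows "f (\<ominus>\<^bsub>M\<^esub> x) = \<ominus>\<^bsub>N\<^esub> f x"
proof -
  interpret M: module R M by fact
  interpret N: module R N by fact
  have "f (\<ominus>\<^bsub>M\<^esub> x) = f ((\<ominus>\<^bsub>R\<^esub> \<one>\<^bsub>R\<^esub>) \<odot>\<^bsub>M\<^esub> x)" using x M.smult_l_minus by simp
  also have "\<dots> = (\<ominus>\<^bsub>R\<^esub> \<one>\<^bsub>R\<^esub>) \<odot>\<^bsub>N\<^esub> f x" using linmapD(3)[OF f] x by simp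
  also have "\<dots> = \<ominus>\<^bsub>N\<^esub> f x" using linmapD(1)[OF f] x N.smult_l_minus by simp
  finally show ?thesis .
qed

lemma linmap_minus:
  assumes M: "module R M" and N: "module R N" and f: "linmap R M N f"
    and x: "x \<in> carrier M" and y: "y \<in> carrier M"
  shows "f (x \<ominus>\<^bsub>M\<^esub> y) = f x \<ominus>\<^bsub>N\<^esub> f y"
proof -
  interpret M: module R M by fact
  interpret N: module R N by fact
  show ?thesis using x y linmapD[OF f] linmap_neg[OF M N f]
    by (simp add: M.minus_eq N.minus_eq)
qed

lemma linmap_finsum:
  assumes M: "module R M" and N: "module R N" and f: "linmap R M N f"
    and A: "finite A" and g: "g \<in> A \<rightarrow> carrier M"
  shows "f (finsum M g A) = finsum N (\<lambda>a. f (g a)) A"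
  using A g
proof (induction A rule: finite_induct)
  case empty
  interpret M: module R M by fact
  interpret N: module R N by fact
  show ?case using linmap_zero[OF M N f] by simp
next
  case (insert a A)
  interpret M: module R M by fact
  interpret N: module R N by fact
  have ga: "g a \<in> carrier M" and gA: "g \<in> A \<rightarrow> carrier M" using insert by auto
  have "f (finsum M g (insert a A)) = f (g a \<oplus>\<^bsub>M\<^esub> finsum M g A)"
    using insert ga gA by (simp add: M.finsum_insert)
  also have "\<dots> = f (g a) \<oplus>\<^bsub>N\<^esub> f (finsum M g A)" using ga gA linmapD(2)[OF f] by simp
  also have "\<dots> = f (g a) \<oplus>\<^bsub>N\<^esub> finsum N (\<lambda>a. f (g a)) A" using insert gA by simp
  also have "\<dots> = finsum N (\<lambda>a. f (g a)) (insert a A)"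
    using insert gA linmapD(1)[OF f] by (subst N.finsum_insert) auto
  finally show ?case .
qed

lemma linmap_comp:
  assumes "linmap R M N f" "linmap R N P g"
  shows "linmap R M P (g \<circ> f)"
  using assms by (auto simp: linmap_def Pi_def)

lemma linmap_diff:
  assumes M: "module R M" and N: "module R N" and f: "linmap R M N f" and g: "linmap R M N g"
  shows "linmap R M N (\<lambda>x. f x \<ominus>\<^bsub>N\<^esub> g x)"
proof -
  interpret M: module R M by fact
  interpret N: module R N by fact
  show ?thesis
  proof (rule linmapI)
    fix x y assume x: "x \<in> carrier M" and y: "y \<in> carrier M"
    show "f (x \<oplus>\<^bsub>M\<^esub> y) \<ominus>\<^bsub>N\<^esub> g (x \<oplus>\<^bsub>M\<^esub> y) = (f x \<ominus>\<^bsub>N\<^esub> g x) \<oplus>\<^bsub>N\<^esub> (f y \<ominus>\<^bsub>N\<^esub> g y)"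
      using x y linmapD[OF f] linmapD[OF g]
      by (simp add: N.minus_eq N.minus_add N.a_ac)
  next
    fix a x assume a: "a \<in> carrier R" and x: "x \<in> carrier M"
    show "f (a \<odot>\<^bsub>M\<^esub> x) \<ominus>\<^bsub>N\<^esub> g (a \<odot>\<^bsub>M\<^esub> x) = a \<odot>\<^bsub>N\<^esub> (f x \<ominus>\<^bsub>N\<^esub> g x)"
      using a x linmapD[OF f] linmapD[OF g]
      by (simp add: N.minus_eq N.smult_r_distr N.smult_r_minus)
  qed (use linmapD(1)[OF f] linmapD(1)[OF g] in auto)
qed

lemma linmap_kernel_sub:
  assumes M: "module R M" and N: "module R N" and f: "linmap R M N f"
    and X: "submodule X R N"
  shows "submodule {x \<in> carrier M. f x \<in> X} R M"
proof -
  interpret M: module R M by fact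
  interpret N: module R N by fact
  note XE = N.submoduleE[OF X]
  show ?thesis
  proof (rule M.submoduleI)
    show "\<zero>\<^bsub>M\<^esub> \<in> {x \<in> carrier M. f x \<in> X}"
    proof -
      obtain a where a: "a \<in> X" using XE(2) by blast
      have "\<zero>\<^bsub>R\<^esub> \<odot>\<^bsub>N\<^esub> a \<in> X" using XE(4) a by blast
      moreover have "\<zero>\<^bsub>R\<^esub> \<odot>\<^bsub>N\<^esub> a = \<zero>\<^bsub>N\<^esub>" using a XE(1) by auto
      ultimately show ?thesis using linmap_zero[OF M N f] by simp
    qed
  next
    fix a assume "a \<in> {x \<in> carrier M. f x \<in> X}"
    then show "\<ominus>\<^bsub>M\<^esub> a \<in> {x \<in> carrier M. f x \<in> X}"
      using linmap_neg[OF M N f] XE(3) by auto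
  next
    fix a b assume "a \<in> {x \<in> carrier M. f x \<in> X}" "b \<in> {x \<in> carrier M. f x \<in> X}"
    then show "a \<oplus>\<^bsub>M\<^esub> b \<in> {x \<in> carrier M. f x \<in> X}"
      using linmapD(2)[OF f] XE(5) by auto
  next
    fix a x assume "a \<in> carrier R" "x \<in> {x \<in> carrier M. f x \<in> X}"
    then show "a \<odot>\<^bsub>M\<^esub> x \<in> {x \<in> carrier M. f x \<in> X}"
      using linmapD(3)[OF f] XE(4) by auto
  qed auto
qed

lemma submodule_finsum:
  assumes N: "module R N" and X: "submodule X R N" and A: "finite A" and g: "g \<in> A \<rightarrow> X"
  shows "finsum N g A \<in> X"
  using A g
proof (induction A rule: finite_induct)
  case empty
  interpret N: module R N by fact
  note XE = N.submoduleE[OF X]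
  obtain b where b: "b \<in> X" using XE(2) by blast
  have "\<zero>\<^bsub>R\<^esub> \<odot>\<^bsub>N\<^esub> b \<in> X" using XE(4) b by blast
  moreover have "\<zero>\<^bsub>R\<^esub> \<odot>\<^bsub>N\<^esub> b = \<zero>\<^bsub>N\<^esub>" using b XE(1) by auto
  ultimately show ?case by simp
next
  case (insert a A)
  interpret N: module R N by fact
  note XE = N.submoduleE[OF X]
  have "g \<in> insert a A \<rightarrow> carrier N" using insert XE(1) by blast
  then show ?case using insert XE(5) by (simp add: N.finsum_insert)
qed

lemma kspan_sub:
  assumes M: "module R M" and S: "S \<subseteq> carrier M"
  shows "submodule (kspan R M S) R M"
proof -
  interpret M: module R M by fact
  let ?F = "{N. submodule N R M \<and> S \<subseteq> N}"
  have cF: "carrier M \<in> ?F" using M.carrier_is_submodule S by blast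
  have E: "\<And>N. N \<in> ?F \<Longrightarrow> submodule N R M" by blast
  show ?thesis unfolding kspan_def
  proof (rule M.submoduleI)
    show "\<Inter> ?F \<subseteq> carrier M" using cF by blast
    show "\<zero>\<^bsub>M\<^esub> \<in> \<Inter> ?F"
    proof
      fix N assume "N \<in> ?F"
      then have X: "submodule N R M" by blast
      note XE = M.submoduleE[OF X]
      obtain b where b: "b \<in> N" using XE(2) by blast
      have "\<zero>\<^bsub>R\<^esub> \<odot>\<^bsub>M\<^esub> b \<in> N" using XE(4) b by blast
      moreover have "\<zero>\<^bsub>R\<^esub> \<odot>\<^bsub>M\<^esub> b = \<zero>\<^bsub>M\<^esub>" using b XE(1) by auto
      ultimately show "\<zero>\<^bsub>M\<^esub> \<in> N" by simp
    qed
  qed (auto dest!: E dest: M.submoduleE)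
qed

lemma kspan_incl: "S \<subseteq> kspan R M S"
  by (auto simp: kspan_def)

lemma kspan_least: "submodule X R M \<Longrightarrow> S \<subseteq> X \<Longrightarrow> kspan R M S \<subseteq> X"
  by (auto simp: kspan_def)


section \<open>Quotients\<close>

locale quot = M: module R M for R :: "'k ring" and M :: "('k, 'c) module" (structure) +
  fixes N assumes N: "submodule N R M"
begin

abbreviation c where "c \<equiv> qcls M N"
abbreviation Q where "Q \<equiv> quotmod M N"

lemma NE1: "N \<subseteq> carrier M" using M.submoduleE[OF N] by blast
lemma NE2: "\<zero> \<in> N"
proof -
  obtain a where a: "a \<in> N" using M.submoduleE(2)[OF N] by blast
  have "\<zero>\<^bsub>R\<^esub> \<odot> a \<in> N" using M.submoduleE(4)[OF N] a by blast
  moreover have "\<zero>\<^bsub>R\<^esub> \<odot> a = \<zero>" using a NE1 by auto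
  ultimately show ?thesis by simp
qed
lemma NE3: "\<And>a. a \<in> N \<Longrightarrow> \<ominus> a \<in> N" using M.submoduleE[OF N] by blast
lemma NE4: "\<And>a b. a \<in> carrier R \<Longrightarrow> b \<in> N \<Longrightarrow> a \<odot> b \<in> N" using M.submoduleE[OF N] by blast
lemma NE5: "\<And>a b. a \<in> N \<Longrightarrow> b \<in> N \<Longrightarrow> a \<oplus> b \<in> N" using M.submoduleE[OF N] by blast
lemmas NE = NE1 NE2 NE3 NE4 NE5

lemma minus_in_N: "x \<in> carrier M \<Longrightarrow> y \<in> carrier M \<Longrightarrow> x \<ominus> y \<in> N \<Longrightarrow> y \<ominus> x \<in> N"
proof -
  assume x: "x \<in> carrier M" and y: "y \<in> carrier M" and d: "x \<ominus> y \<in> N"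
  have "\<ominus> (x \<ominus> y) = y \<ominus> x" using x y by (simp add: M.minus_eq M.minus_add M.minus_minus M.a_comm)
  then show ?thesis using NE3[OF d] by simp
qed

lemma swap_neg: "a \<in> carrier M \<Longrightarrow> b \<in> carrier M \<Longrightarrow> d \<in> carrier M \<Longrightarrow> a \<oplus> (b \<oplus> (\<ominus> a \<oplus> d)) = b \<oplus> d"
  by (simp add: M.a_lcomm[of a b] M.r_neg2)

lemma swap_neg2: "a \<in> carrier M \<Longrightarrow> b \<in> carrier M \<Longrightarrow> d \<in> carrier M \<Longrightarrow> a \<oplus> (b \<oplus> (d \<oplus> \<ominus> a)) = b \<oplus> d"
  by (simp add: M.a_lcomm[of a b] M.a_comm[of d] M.r_neg2)

lemma self_in_c: "x \<in> carrier M \<Longrightarrow> x \<in> c x"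
  using NE(2) by (simp add: qcls_def M.r_neg M.minus_eq)

lemma c_eq_iff: "x \<in> carrier M \<Longrightarrow> y \<in> carrier M \<Longrightarrow> (c x = c y) \<longleftrightarrow> x \<ominus> y \<in> N"
proof
  assume x: "x \<in> carrier M" and y: "y \<in> carrier M" and e: "c x = c y"
  have "x \<in> c y" using self_in_c[OF x] e by simp
  then show "x \<ominus> y \<in> N" by (simp add: qcls_def)
next
  assume x: "x \<in> carrier M" and y: "y \<in> carrier M" and d: "x \<ominus> y \<in> N"
  have "z \<ominus> x \<in> N \<longleftrightarrow> z \<ominus> y \<in> N" if z: "z \<in> carrier M" for z
  proof -
    have e1: "z \<ominus> y = (z \<ominus> x) \<oplus> (x \<ominus> y)" using x y z by (simp add: M.minus_eq M.a_ac M.l_neg swap_neg swap_neg2)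
    have e2: "z \<ominus> x = (z \<ominus> y) \<oplus> (y \<ominus> x)" using x y z by (simp add: M.minus_eq M.a_ac M.l_neg swap_neg swap_neg2)
    show ?thesis
    proof
      assume "z \<ominus> x \<in> N" then show "z \<ominus> y \<in> N" unfolding e1 using NE(5) d by blast
    next
      assume "z \<ominus> y \<in> N" then show "z \<ominus> x \<in> N" unfolding e2 using NE(5) minus_in_N[OF x y d] by blast
    qed
  qed
  then show "c x = c y" by (auto simp: qcls_def)
qed

lemma Q_carrier: "carrier Q = c ` carrier M" by (simp add: quotmod_def)

lemma c_closed: "x \<in> carrier M \<Longrightarrow> c x \<in> carrier Q" by (simp add: quotmod_def)

lemma qrep_c: "x \<in> carrier M \<Longrightarrow> qrep (c x) \<in> carrier M \<and> c (qrep (c x)) = c x \<and> qrep (c x) \<ominus> x \<in> N"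
proof -
  assume x: "x \<in> carrier M"
  have "qrep (c x) \<in> c x" unfolding qrep_def using self_in_c[OF x] by (rule someI)
  then have r: "qrep (c x) \<in> carrier M" "qrep (c x) \<ominus> x \<in> N" by (auto simp: qcls_def)
  then show ?thesis using c_eq_iff x by auto
qed

lemma qrep_closed: "A \<in> carrier Q \<Longrightarrow> qrep A \<in> carrier M"
  using qrep_c by (auto simp: Q_carrier)

lemma c_qrep: "A \<in> carrier Q \<Longrightarrow> c (qrep A) = A"
  using qrep_c by (auto simp: Q_carrier)

lemma Q_zero: "\<zero>\<^bsub>Q\<^esub> = c \<zero>" by (simp add: quotmod_def)

lemma c_add: "x \<in> carrier M \<Longrightarrow> y \<in> carrier M \<Longrightarrow> c x \<oplus>\<^bsub>Q\<^esub> c y = c (x \<oplus> y)"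
proof -
  assume x: "x \<in> carrier M" and y: "y \<in> carrier M"
  have "c x \<oplus>\<^bsub>Q\<^esub> c y = c (qrep (c x) \<oplus> qrep (c y))" by (simp add: quotmod_def)
  also have "\<dots> = c (x \<oplus> y)"
  proof -
    have a: "qrep (c x) \<ominus> x \<in> N" "qrep (c y) \<ominus> y \<in> N" using qrep_c x y c_eq_iff by auto
    have "(qrep (c x) \<oplus> qrep (c y)) \<ominus> (x \<oplus> y) = (qrep (c x) \<ominus> x) \<oplus> (qrep (c y) \<ominus> y)"
      using qrep_c x y by (simp add: M.minus_eq M.minus_add M.a_ac)
    then show ?thesis using a NE(5) c_eq_iff qrep_c x y by auto
  qed
  finally show ?thesis .
qed

lemma c_smult: "a \<in> carrier R \<Longrightarrow> x \<in> carrier M \<Longrightarrow> a \<odot>\<^bsub>Q\<^esub> c x = c (a \<odot> x)"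
proof -
  assume a: "a \<in> carrier R" and x: "x \<in> carrier M"
  have "a \<odot>\<^bsub>Q\<^esub> c x = c (a \<odot> qrep (c x))" by (simp add: quotmod_def)
  also have "\<dots> = c (a \<odot> x)"
  proof -
    have d: "qrep (c x) \<ominus> x \<in> N" using qrep_c x c_eq_iff by auto
    have "a \<odot> qrep (c x) \<ominus> a \<odot> x = a \<odot> (qrep (c x) \<ominus> x)"
      using qrep_c x a by (simp add: M.minus_eq M.smult_r_distr M.smult_r_minus)
    then show ?thesis using NE(4)[OF a d] c_eq_iff qrep_c x a by auto
  qed
  finally show ?thesis .
qed

lemma neg0: "\<ominus> \<zero> = \<zero>" using M.neg_zero_iff[of \<zero>] by simp

lemma c_zero_iff: "x \<in> carrier M \<Longrightarrow> (c x = \<zero>\<^bsub>Q\<^esub>) \<longleftrightarrow> x \<in> N"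
  using c_eq_iff[of x "\<zero>"] by (simp add: Q_zero M.minus_eq neg0)

lemma Q_module: "module R Q"
proof -
  have ag: "abelian_group Q"
  proof (rule abelian_groupI)
    fix x y assume "x \<in> carrier Q" "y \<in> carrier Q"
    then show "x \<oplus>\<^bsub>Q\<^esub> y \<in> carrier Q" by (auto simp: Q_carrier c_add)
  next
    show "\<zero>\<^bsub>Q\<^esub> \<in> carrier Q" by (simp add: Q_zero c_closed)
  next
    fix x y z assume "x \<in> carrier Q" "y \<in> carrier Q" "z \<in> carrier Q"
    then show "x \<oplus>\<^bsub>Q\<^esub> y \<oplus>\<^bsub>Q\<^esub> z = x \<oplus>\<^bsub>Q\<^esub> (y \<oplus>\<^bsub>Q\<^esub> z)"
      by (auto simp: Q_carrier c_add M.a_assoc)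
  next
    fix x y assume "x \<in> carrier Q" "y \<in> carrier Q"
    then show "x \<oplus>\<^bsub>Q\<^esub> y = y \<oplus>\<^bsub>Q\<^esub> x" by (auto simp: Q_carrier c_add M.a_comm)
  next
    fix x assume "x \<in> carrier Q"
    then show "\<zero>\<^bsub>Q\<^esub> \<oplus>\<^bsub>Q\<^esub> x = x" by (auto simp: Q_carrier Q_zero c_add)
  next
    fix x assume "x \<in> carrier Q"
    then obtain y where y: "y \<in> carrier M" "x = c y" by (auto simp: Q_carrier)
    then have "c (\<ominus> y) \<in> carrier Q" "c (\<ominus> y) \<oplus>\<^bsub>Q\<^esub> x = \<zero>\<^bsub>Q\<^esub>"
      by (auto simp: c_closed c_add M.l_neg Q_zero)
    then show "\<exists>y\<in>carrier Q. y \<oplus>\<^bsub>Q\<^esub> x = \<zero>\<^bsub>Q\<^esub>" by blast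
  qed
  show ?thesis
  proof (rule moduleI[OF M.is_cring ag])
    fix a x assume "a \<in> carrier R" "x \<in> carrier Q"
    then show "a \<odot>\<^bsub>Q\<^esub> x \<in> carrier Q" by (auto simp: Q_carrier c_smult)
  next
    fix a b x assume "a \<in> carrier R" "b \<in> carrier R" "x \<in> carrier Q"
    then show "(a \<oplus>\<^bsub>R\<^esub> b) \<odot>\<^bsub>Q\<^esub> x = a \<odot>\<^bsub>Q\<^esub> x \<oplus>\<^bsub>Q\<^esub> b \<odot>\<^bsub>Q\<^esub> x"
      by (auto simp: Q_carrier c_smult c_add M.smult_l_distr)
  next
    fix a x y assume "a \<in> carrier R" "x \<in> carrier Q" "y \<in> carrier Q"
    then show "a \<odot>\<^bsub>Q\<^esub> (x \<oplus>\<^bsub>Q\<^esub> y) = a \<odot>\<^bsub>Q\<^esub> x \<oplus>\<^bsub>Q\<^esub> a \<odot>\<^bsub>Q\<^esub> y"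
      by (auto simp: Q_carrier c_smult c_add M.smult_r_distr)
  next
    fix a b x assume "a \<in> carrier R" "b \<in> carrier R" "x \<in> carrier Q"
    then show "(a \<otimes>\<^bsub>R\<^esub> b) \<odot>\<^bsub>Q\<^esub> x = a \<odot>\<^bsub>Q\<^esub> (b \<odot>\<^bsub>Q\<^esub> x)"
      by (auto simp: Q_carrier c_smult M.smult_assoc1)
  next
    fix x assume "x \<in> carrier Q"
    then show "\<one>\<^bsub>R\<^esub> \<odot>\<^bsub>Q\<^esub> x = x" by (auto simp: Q_carrier c_smult)
  qed
qed

lemma c_linmap: "linmap R M Q c"
  by (rule linmapI) (auto simp: c_closed c_add c_smult)

lemma c_finsum: "finite A \<Longrightarrow> g \<in> A \<rightarrow> carrier M \<Longrightarrow> c (finsum M g A) = finsum Q (\<lambda>a. c (g a)) A"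
  using linmap_finsum[OF M.module_axioms Q_module c_linmap] by blast

end


locale dsctx =
  fixes R :: "'k ring" and I :: "'i set" and M :: "'i \<Rightarrow> ('k, 'a) module"
  assumes R: "cring R" and Mmod: "\<And>i. i \<in> I \<Longrightarrow> module R (M i)"
begin

abbreviation D where "D \<equiv> dsum R I M"
abbreviation ds where "ds \<equiv> dsingle I M"

lemma D_module: "module R D" by (rule dsum_module[OF R Mmod])

lemma ag: "i \<in> I \<Longrightarrow> abelian_group (M i)" by (rule module.axioms(2)[OF Mmod])

lemma abelianE0: "i \<in> I \<Longrightarrow> \<zero>\<^bsub>M i\<^esub> \<in> carrier (M i)" by (rule abelian_groupE(2)[OF ag])

lemma smult_r_null_i: "i \<in> I \<Longrightarrow> a \<in> carrier R \<Longrightarrow> a \<odot>\<^bsub>M i\<^esub> \<zero>\<^bsub>M i\<^esub> = \<zero>\<^bsub>M i\<^esub>"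
  by (rule module.smult_r_null[OF Mmod])

lemma ds_apply: "i \<in> I \<Longrightarrow> ds j w i = (if i = j then w else \<zero>\<^bsub>M i\<^esub>)"
  by (simp add: dsingle_def)

lemma ds_carrier: "j \<in> I \<Longrightarrow> w \<in> carrier (M j) \<Longrightarrow> ds j w \<in> carrier D"
proof -
  assume j: "j \<in> I" and w: "w \<in> carrier (M j)"
  have "supp I M (ds j w) \<subseteq> {j}" by (auto simp: supp_def dsingle_def)
  moreover have "\<forall>i\<in>I. ds j w i \<in> carrier (M i)"
    using j w abelianE0 by (simp add: dsingle_def)
  moreover have "\<forall>i. i \<notin> I \<longrightarrow> ds j w i = undefined" by (simp add: dsingle_def)
  ultimately show ?thesis unfolding dsum_carrier using finite_subset by blast
qed

lemma ds_linmap: "j \<in> I \<Longrightarrow> linmap R (M j) D (ds j)"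
proof (rule linmapI)
  fix x y assume j: "j \<in> I" and "x \<in> carrier (M j)" "y \<in> carrier (M j)"
  then show "ds j (x \<oplus>\<^bsub>M j\<^esub> y) = ds j x \<oplus>\<^bsub>D\<^esub> ds j y"
    using abelianE0 by (auto simp: dsingle_def dsum_add fun_eq_iff abelian_groupE(5)[OF ag])
next
  fix a x assume j: "j \<in> I" and "a \<in> carrier R" "x \<in> carrier (M j)"
  then show "ds j (a \<odot>\<^bsub>M j\<^esub> x) = a \<odot>\<^bsub>D\<^esub> ds j x"
    by (auto simp: dsingle_def dsum_smult fun_eq_iff smult_r_null_i)
qed (rule ds_carrier)

lemma ds_zero: "j \<in> I \<Longrightarrow> ds j \<zero>\<^bsub>M j\<^esub> = \<zero>\<^bsub>D\<^esub>"
  by (auto simp: dsingle_def dsum_zero)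

lemma D_eqI: "F \<in> carrier D \<Longrightarrow> H \<in> carrier D \<Longrightarrow> (\<And>i. i \<in> I \<Longrightarrow> F i = H i) \<Longrightarrow> F = H"
  apply (rule ext) subgoal for x by (cases "x \<in> I") (auto simp: dsum_carrier) done

lemma D_finsum_apply:
  assumes A: "finite A" and f: "f \<in> A \<rightarrow> carrier D" and i: "i \<in> I"
  shows "finsum D f A i = finsum (M i) (\<lambda>a. f a i) A"
  using A f
proof (induction A rule: finite_induct)
  case empty
  interpret D: module R D by (rule D_module)
  interpret Mi: abelian_group "M i" by (rule ag[OF i])
  show ?case using i by (simp add: dsum_zero)
next
  case (insert a A)
  interpret D: module R D by (rule D_module)
  interpret Mi: abelian_group "M i" by (rule ag[OF i])
  have fa: "f a \<in> carrier D" and fA: "f \<in> A \<rightarrow> carrier D" using insert by auto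
  have "finsum D f (insert a A) i = (f a \<oplus>\<^bsub>D\<^esub> finsum D f A) i"
    using insert fa fA by (simp add: D.finsum_insert)
  also have "\<dots> = f a i \<oplus>\<^bsub>M i\<^esub> finsum (M i) (\<lambda>a. f a i) A"
    using insert fA i by (simp add: dsum_add)
  also have "\<dots> = finsum (M i) (\<lambda>a. f a i) (insert a A)"
    using insert fa fA i by (subst Mi.finsum_insert) (auto simp: dsum_carrier Pi_def)
  finally show ?case .
qed

lemma D_decomp:
  assumes F: "F \<in> carrier D"
  shows "finsum D (\<lambda>i. ds i (F i)) (supp I M F) = F"
proof (rule D_eqI)
  have fin: "finite (supp I M F)" using F by (simp add: dsum_carrier)
  have cl: "(\<lambda>i. ds i (F i)) \<in> supp I M F \<rightarrow> carrier D"
    using F by (auto simp: supp_def dsum_carrier intro!: ds_carrier)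
  show "finsum D (\<lambda>i. ds i (F i)) (supp I M F) \<in> carrier D"
    using abelian_monoid.finsum_closed[OF abelian_group.axioms(1)[OF module.axioms(2)[OF D_module]] cl] .
  show "F \<in> carrier D" by fact
  fix i assume i: "i \<in> I"
  interpret Mi: abelian_group "M i" by (rule ag[OF i])
  have "finsum D (\<lambda>i. ds i (F i)) (supp I M F) i = finsum (M i) (\<lambda>j. ds j (F j) i) (supp I M F)"
    by (rule D_finsum_apply[OF fin cl i])
  also have "\<dots> = finsum (M i) (\<lambda>j. if i = j then F j else \<zero>\<^bsub>M i\<^esub>) (supp I M F)"
    by (rule Mi.finsum_cong') (use F i in \<open>auto simp: ds_apply[OF i] dsum_carrier supp_def\<close>)
  also have "\<dots> = F i"
  proof (cases "i \<in> supp I M F")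
    case True
    have Fc: "F j \<in> carrier (M j)" if "j \<in> supp I M F" for j using F that by (auto simp: dsum_carrier supp_def)
    have "finsum (M i) (\<lambda>j. if i = j then F j else \<zero>\<^bsub>M i\<^esub>) (supp I M F)
        = finsum (M i) (\<lambda>j. if i = j then F i else \<zero>\<^bsub>M i\<^esub>) (supp I M F)"
      by (rule Mi.finsum_cong') (auto simp: Fc[OF True])
    also have "\<dots> = F i" using Mi.add.finprod_singleton[OF True fin, of "\<lambda>_. F i"] Fc[OF True] by auto
    finally show ?thesis .
  next
    case False
    then have "F i = \<zero>\<^bsub>M i\<^esub>" using i by (simp add: supp_def)
    moreover have "finsum (M i) (\<lambda>j. if i = j then F j else \<zero>\<^bsub>M i\<^esub>) (supp I M F) = \<zero>\<^bsub>M i\<^esub>"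
      using False by (intro Mi.add.finprod_one_eqI) auto
    ultimately show ?thesis by simp
  qed
  finally show "finsum D (\<lambda>i. ds i (F i)) (supp I M F) i = F i" .
qed

lemma D_lin_ext:
  assumes N: "module R N" and L: "linmap R D N L" and F: "F \<in> carrier D"
  shows "L F = finsum N (\<lambda>i. L (ds i (F i))) (supp I M F)"
proof -
  have fin: "finite (supp I M F)" using F by (simp add: dsum_carrier)
  have cl: "(\<lambda>i. ds i (F i)) \<in> supp I M F \<rightarrow> carrier D"
    using F by (auto simp: supp_def dsum_carrier intro!: ds_carrier)
  have "L F = L (finsum D (\<lambda>i. ds i (F i)) (supp I M F))" using D_decomp[OF F] by simp
  also have "\<dots> = finsum N (\<lambda>i. L (ds i (F i))) (supp I M F)"
    by (rule linmap_finsum[OF D_module N L fin cl])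
  finally show ?thesis .
qed

lemma D_lin_sub:
  assumes N: "module R N" and L: "linmap R D N L" and X: "submodule X R N"
    and gen: "\<And>j w. j \<in> I \<Longrightarrow> w \<in> carrier (M j) \<Longrightarrow> L (ds j w) \<in> X"
    and F: "F \<in> carrier D"
  shows "L F \<in> X"
proof -
  have fin: "finite (supp I M F)" using F by (simp add: dsum_carrier)
  show ?thesis unfolding D_lin_ext[OF N L F]
    by (rule submodule_finsum[OF N X fin]) (use F in \<open>auto simp: supp_def dsum_carrier intro!: gen\<close>)
qed

lemma D_lin_eq:
  assumes N: "module R N" and L: "linmap R D N L" and L': "linmap R D N L'"
    and gen: "\<And>j w. j \<in> I \<Longrightarrow> w \<in> carrier (M j) \<Longrightarrow> L (ds j w) = L' (ds j w)"
    and F: "F \<in> carrier D"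
  shows "L F = L' F"
  unfolding D_lin_ext[OF N L F] D_lin_ext[OF N L' F]
  using F by (intro abelian_monoid.finsum_cong' abelian_group.axioms(1) module.axioms(2)[OF N])
    (auto simp: gen dsum_carrier supp_def Pi_def intro!: linmapD(1)[OF L'] ds_carrier)

end


lemma fimorD:
  assumes "\<phi> \<in> fimor G n m"
  shows "fst \<phi> \<in> {..<n} \<rightarrow>\<^sub>E {..<m}" "inj_on (fst \<phi>) {..<n}" "snd \<phi> \<in> {..<n} \<rightarrow>\<^sub>E carrier G"
proof -
  obtain f g where p: "\<phi> = (f, g)" by (cases \<phi>)
  have "f \<in> {..<n} \<rightarrow>\<^sub>E {..<m} \<and> inj_on f {..<n} \<and> g \<in> {..<n} \<rightarrow>\<^sub>E carrier G"
    using assms unfolding p fimor_def by (simp only: mem_Collect_eq case_prod_conv)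
  then show "fst \<phi> \<in> {..<n} \<rightarrow>\<^sub>E {..<m}" "inj_on (fst \<phi>) {..<n}" "snd \<phi> \<in> {..<n} \<rightarrow>\<^sub>E carrier G"
    unfolding p by simp_all
qed

lemma fimorI:
  "fst \<phi> \<in> {..<n} \<rightarrow>\<^sub>E {..<m} \<Longrightarrow> inj_on (fst \<phi>) {..<n} \<Longrightarrow> snd \<phi> \<in> {..<n} \<rightarrow>\<^sub>E carrier G
   \<Longrightarrow> \<phi> \<in> fimor G n m"
  by (cases \<phi>) (simp only: fimor_def mem_Collect_eq case_prod_conv fst_conv snd_conv)

lemma fimor_eqI:
  assumes "\<phi> \<in> fimor G n m" "\<psi> \<in> fimor G n m'"
    and "\<And>x. x < n \<Longrightarrow> fst \<phi> x = fst \<psi> x" "\<And>x. x < n \<Longrightarrow> snd \<phi> x = snd \<psi> x"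
  shows "\<phi> = \<psi>"
proof -
  have "fst \<phi> = fst \<psi>"
  proof
    fix x show "fst \<phi> x = fst \<psi> x"
      using fimorD(1)[OF assms(1)] fimorD(1)[OF assms(2)] assms(3)
      by (cases "x < n") (auto simp: PiE_def extensional_def)
  qed
  moreover have "snd \<phi> = snd \<psi>"
  proof
    fix x show "snd \<phi> x = snd \<psi> x"
      using fimorD(3)[OF assms(1)] fimorD(3)[OF assms(2)] assms(4)
      by (cases "x < n") (auto simp: PiE_def extensional_def)
  qed
  ultimately show ?thesis by (simp add: prod_eq_iff)
qed

lemma ficomp_fst: "x < n \<Longrightarrow> fst (ficomp G n \<phi> \<psi>) x = fst \<phi> (fst \<psi> x)"
  by (simp add: ficomp_def)
lemma ficomp_snd: "x < n \<Longrightarrow> snd (ficomp G n \<phi> \<psi>) x = snd \<psi> x \<otimes>\<^bsub>G\<^esub> snd \<phi> (fst \<psi> x)"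
  by (simp add: ficomp_def)
lemma fiid_fst: "x < n \<Longrightarrow> fst (fiid G n) x = x" by (simp add: fiid_def)
lemma fiid_snd: "x < n \<Longrightarrow> snd (fiid G n) x = \<one>\<^bsub>G\<^esub>" by (simp add: fiid_def)

locale fgrp = group G for G :: "'g monoid" (structure)

context fgrp
begin

lemma fimor_fst_lt: "\<phi> \<in> fimor G n m \<Longrightarrow> x < n \<Longrightarrow> fst \<phi> x < m"
  using fimorD(1) by fastforce
lemma fimor_snd_in: "\<phi> \<in> fimor G n m \<Longrightarrow> x < n \<Longrightarrow> snd \<phi> x \<in> carrier G"
  using fimorD(3) by fastforce

lemma ficomp_mor:
  assumes \<psi>: "\<psi> \<in> fimor G n m" and \<phi>: "\<phi> \<in> fimor G m p"
  shows "ficomp G n \<phi> \<psi> \<in> fimor G n p"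
proof (rule fimorI)
  show "fst (ficomp G n \<phi> \<psi>) \<in> {..<n} \<rightarrow>\<^sub>E {..<p}"
    using fimor_fst_lt[OF \<psi>] fimor_fst_lt[OF \<phi>] by (auto simp: ficomp_def)
  show "inj_on (fst (ficomp G n \<phi> \<psi>)) {..<n}"
  proof (rule inj_onI)
    fix x y assume "x \<in> {..<n}" "y \<in> {..<n}" "fst (ficomp G n \<phi> \<psi>) x = fst (ficomp G n \<phi> \<psi>) y"
    then show "x = y" using fimor_fst_lt[OF \<psi>] fimorD(2)[OF \<phi>] fimorD(2)[OF \<psi>]
      by (auto simp: ficomp_def inj_on_def)
  qed
  show "snd (ficomp G n \<phi> \<psi>) \<in> {..<n} \<rightarrow>\<^sub>E carrier G"
    using fimor_fst_lt[OF \<psi>] fimor_snd_in[OF \<psi>] fimor_snd_in[OF \<phi>] by (auto simp: ficomp_def)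
qed

lemma fiid_mor: "fiid G n \<in> fimor G n n"
  by (rule fimorI) (auto simp: fiid_def)

lemma ficomp_assoc:
  assumes \<psi>: "\<psi> \<in> fimor G n m" and \<phi>: "\<phi> \<in> fimor G m p" and \<chi>: "\<chi> \<in> fimor G p q"
  shows "ficomp G n (ficomp G m \<chi> \<phi>) \<psi> = ficomp G n \<chi> (ficomp G n \<phi> \<psi>)"
proof (rule fimor_eqI)
  show "ficomp G n (ficomp G m \<chi> \<phi>) \<psi> \<in> fimor G n q"
    by (intro ficomp_mor[OF \<psi>] ficomp_mor[OF \<phi> \<chi>])
  show "ficomp G n \<chi> (ficomp G n \<phi> \<psi>) \<in> fimor G n q"
    by (intro ficomp_mor[OF _ \<chi>] ficomp_mor[OF \<psi> \<phi>])
  fix x assume x: "x < n"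
  have y: "fst \<psi> x < m" using fimor_fst_lt[OF \<psi> x] .
  show "fst (ficomp G n (ficomp G m \<chi> \<phi>) \<psi>) x = fst (ficomp G n \<chi> (ficomp G n \<phi> \<psi>)) x"
    using x y by (simp add: ficomp_fst)
  show "snd (ficomp G n (ficomp G m \<chi> \<phi>) \<psi>) x = snd (ficomp G n \<chi> (ficomp G n \<phi> \<psi>)) x"
    using x y fimor_snd_in[OF \<psi> x] fimor_snd_in[OF \<phi> y] fimor_snd_in[OF \<chi> fimor_fst_lt[OF \<phi> y]]
    by (simp add: ficomp_fst ficomp_snd m_assoc)
qed

lemma fiid_left:
  assumes \<phi>: "\<phi> \<in> fimor G n p"
  shows "ficomp G n (fiid G p) \<phi> = \<phi>"
  by (rule fimor_eqI[OF ficomp_mor[OF \<phi> fiid_mor] \<phi>])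
    (simp_all add: ficomp_fst ficomp_snd fiid_fst fiid_snd fimor_fst_lt[OF \<phi>] fimor_snd_in[OF \<phi>])

lemma fiid_right:
  assumes \<phi>: "\<phi> \<in> fimor G n p"
  shows "ficomp G n \<phi> (fiid G n) = \<phi>"
  by (rule fimor_eqI[OF ficomp_mor[OF fiid_mor \<phi>] \<phi>])
    (simp_all add: ficomp_fst ficomp_snd fiid_fst fiid_snd fimor_fst_lt[OF \<phi>] fimor_snd_in[OF \<phi>])

lemma ficomp_cancel:
  assumes \<phi>: "\<phi> \<in> fimor G m p" and \<psi>: "\<psi> \<in> fimor G n m" and \<psi>': "\<psi>' \<in> fimor G n m"
    and e: "ficomp G n \<phi> \<psi> = ficomp G n \<phi> \<psi>'"
  shows "\<psi> = \<psi>'"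
proof (rule fimor_eqI[OF \<psi> \<psi>'])
  fix x assume x: "x < n"
  have "fst \<phi> (fst \<psi> x) = fst \<phi> (fst \<psi>' x)"
    using arg_cong[OF e, of "\<lambda>\<chi>. fst \<chi> x"] x by (simp add: ficomp_fst)
  then show f: "fst \<psi> x = fst \<psi>' x"
    using fimorD(2)[OF \<phi>] fimor_fst_lt[OF \<psi> x] fimor_fst_lt[OF \<psi>' x] by (auto simp: inj_on_def)
  have "snd \<psi> x \<otimes> snd \<phi> (fst \<psi> x) = snd \<psi>' x \<otimes> snd \<phi> (fst \<psi> x)"
    using arg_cong[OF e, of "\<lambda>\<chi>. snd \<chi> x"] x f by (simp add: ficomp_snd)
  then show "snd \<psi> x = snd \<psi>' x"
    using right_cancel[OF fimor_snd_in[OF \<phi> fimor_fst_lt[OF \<psi> x]] fimor_snd_in[OF \<psi> x] fimor_snd_in[OF \<psi>' x]]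
    by simp
qed

lemma right_inv:
  assumes \<sigma>: "\<sigma> \<in> fimor G n n"
  shows "\<exists>\<tau>\<in>fimor G n n. ficomp G n \<sigma> \<tau> = fiid G n"
proof -
  let ?f = "fst \<sigma>" and ?g = "snd \<sigma>"
  have inj: "inj_on ?f {..<n}" using fimorD(2)[OF \<sigma>] .
  have im: "?f ` {..<n} = {..<n}"
    using endo_inj_surj[of "{..<n}" ?f] inj fimor_fst_lt[OF \<sigma>] by auto
  define t where "t = the_inv_into {..<n} ?f"
  have t_in: "x < n \<Longrightarrow> t x < n" for x
    using the_inv_into_into[OF inj, of x "{..<n}"] im by (auto simp: t_def)
  have ft: "x < n \<Longrightarrow> ?f (t x) = x" for x
    using f_the_inv_into_f[OF inj, of x] im by (auto simp: t_def)
  define \<tau> where "\<tau> = (restrict t {..<n}, restrict (\<lambda>x. inv (?g (t x))) {..<n})"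
  have \<tau>: "\<tau> \<in> fimor G n n"
  proof (rule fimorI)
    show "fst \<tau> \<in> {..<n} \<rightarrow>\<^sub>E {..<n}" using t_in by (auto simp: \<tau>_def)
    show "inj_on (fst \<tau>) {..<n}"
    proof (rule inj_onI)
      fix x y assume x: "x \<in> {..<n}" and y: "y \<in> {..<n}" and e: "fst \<tau> x = fst \<tau> y"
      have "t x = t y" using e x y by (simp add: \<tau>_def)
      then have "?f (t x) = ?f (t y)" by simp
      then show "x = y" using ft x y by simp
    qed
    show "snd \<tau> \<in> {..<n} \<rightarrow>\<^sub>E carrier G"
      using t_in fimor_snd_in[OF \<sigma>] by (auto simp: \<tau>_def)
  qed
  have "ficomp G n \<sigma> \<tau> = fiid G n"
  proof (rule fimor_eqI[OF ficomp_mor[OF \<tau> \<sigma>] fiid_mor])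
    fix x assume x: "x < n"
    show "fst (ficomp G n \<sigma> \<tau>) x = fst (fiid G n) x"
      using x by (simp add: ficomp_fst fiid_fst \<tau>_def ft)
    show "snd (ficomp G n \<sigma> \<tau>) x = snd (fiid G n) x"
      using x t_in[OF x] fimor_snd_in[OF \<sigma>] by (simp add: ficomp_snd fiid_snd \<tau>_def)
  qed
  then show ?thesis using \<tau> by blast
qed

end


locale pctx = fgrp G for G :: "'g monoid" (structure) +
  fixes R :: "'k ring" and W :: "('k, 'w) module" and n :: nat
  assumes R: "cring R" and Wm: "module R W"
begin

abbreviation P where "P p \<equiv> Mpre R G n W p"
abbreviation ds where "ds p \<equiv> dsingle (fimor G n p) (\<lambda>_. W)"
abbreviation sp where "sp p \<equiv> supp (fimor G n p) (\<lambda>_. W)"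
abbreviation push where "push p q \<equiv> Mpush G n W p q"

lemma P_ds: "dsctx R (fimor G n p) (\<lambda>_. W)"
  by (rule dsctx.intro[OF R Wm])

lemma P_def': "P p = dsum R (fimor G n p) (\<lambda>_. W)" by (simp add: Mpre_def)

lemma P_module: "module R (P p)"
  unfolding P_def' by (rule dsctx.D_module[OF P_ds])

lemma P_carrier: "F \<in> carrier (P p) \<longleftrightarrow> (\<forall>\<phi>\<in>fimor G n p. F \<phi> \<in> carrier W) \<and> (\<forall>\<phi>. \<phi> \<notin> fimor G n p \<longrightarrow> F \<phi> = undefined)
   \<and> finite (sp p F)"
  unfolding P_def' dsum_carrier by simp

lemma P_zero: "\<zero>\<^bsub>P p\<^esub> = (\<lambda>\<phi>. if \<phi> \<in> fimor G n p then \<zero>\<^bsub>W\<^esub> else undefined)"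
  by (simp add: P_def' dsum_zero)
lemma P_add: "F \<oplus>\<^bsub>P p\<^esub> H = (\<lambda>\<phi>. if \<phi> \<in> fimor G n p then F \<phi> \<oplus>\<^bsub>W\<^esub> H \<phi> else undefined)"
  by (simp add: P_def' dsum_add)
lemma P_smult: "a \<odot>\<^bsub>P p\<^esub> H = (\<lambda>\<phi>. if \<phi> \<in> fimor G n p then a \<odot>\<^bsub>W\<^esub> H \<phi> else undefined)"
  by (simp add: P_def' dsum_smult)

lemma ds_carrier: "\<phi> \<in> fimor G n p \<Longrightarrow> w \<in> carrier W \<Longrightarrow> ds p \<phi> w \<in> carrier (P p)"
  unfolding P_def' by (rule dsctx.ds_carrier[OF P_ds])

lemma ds_linmap: "\<phi> \<in> fimor G n p \<Longrightarrow> linmap R W (P p) (ds p \<phi>)"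
  unfolding P_def' by (rule dsctx.ds_linmap[OF P_ds])

lemma ds_apply: "\<chi> \<in> fimor G n p \<Longrightarrow> ds p \<phi> w \<chi> = (if \<chi> = \<phi> then w else \<zero>\<^bsub>W\<^esub>)"
  by (simp add: dsingle_def)

lemma P_eqI: "F \<in> carrier (P p) \<Longrightarrow> H \<in> carrier (P p) \<Longrightarrow> (\<And>\<phi>. \<phi> \<in> fimor G n p \<Longrightarrow> F \<phi> = H \<phi>) \<Longrightarrow> F = H"
  unfolding P_def' by (rule dsctx.D_eqI[OF P_ds])

lemma P_lin_eq:
  assumes N: "module R N" and L: "linmap R (P p) N L" and L': "linmap R (P p) N L'"
    and gen: "\<And>\<phi> w. \<phi> \<in> fimor G n p \<Longrightarrow> w \<in> carrier W \<Longrightarrow> L (ds p \<phi> w) = L' (ds p \<phi> w)"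
    and F: "F \<in> carrier (P p)"
  shows "L F = L' F"
proof -
  interpret D: dsctx R "fimor G n p" "\<lambda>_. W" by (rule P_ds)
  show ?thesis by (rule D.D_lin_eq[OF N L[unfolded P_def'] L'[unfolded P_def'] gen F[unfolded P_def']])
qed

lemma P_lin_sub:
  assumes N: "module R N" and L: "linmap R (P p) N L" and X: "submodule X R N"
    and gen: "\<And>\<phi> w. \<phi> \<in> fimor G n p \<Longrightarrow> w \<in> carrier W \<Longrightarrow> L (ds p \<phi> w) \<in> X"
    and F: "F \<in> carrier (P p)"
  shows "L F \<in> X"
proof -
  interpret D: dsctx R "fimor G n p" "\<lambda>_. W" by (rule P_ds)
  show ?thesis by (rule D.D_lin_sub[OF N L[unfolded P_def'] X gen F[unfolded P_def']])
qed

lemma P_lin_ext: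
  assumes N: "module R N" and L: "linmap R (P p) N L" and F: "F \<in> carrier (P p)"
  shows "L F = finsum N (\<lambda>\<phi>. L (ds p \<phi> (F \<phi>))) (sp p F)"
proof -
  interpret D: dsctx R "fimor G n p" "\<lambda>_. W" by (rule P_ds)
  show ?thesis by (rule D.D_lin_ext[OF N L[unfolded P_def'] F[unfolded P_def']])
qed

lemma P_decomp:
  assumes F: "F \<in> carrier (P p)"
  shows "finsum (P p) (\<lambda>\<phi>. ds p \<phi> (F \<phi>)) (sp p F) = F"
proof -
  interpret D: dsctx R "fimor G n p" "\<lambda>_. W" by (rule P_ds)
  show ?thesis unfolding P_def' by (rule D.D_decomp[OF F[unfolded P_def']])
qed

lemma P_finsum_apply:
  assumes A: "finite A" and f: "f \<in> A \<rightarrow> carrier (P p)" and i: "\<chi> \<in> fimor G n p"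
  shows "finsum (P p) f A \<chi> = finsum W (\<lambda>a. f a \<chi>) A"
proof -
  interpret D: dsctx R "fimor G n p" "\<lambda>_. W" by (rule P_ds)
  show ?thesis unfolding P_def' by (rule D.D_finsum_apply[OF A f[unfolded P_def'] i])
qed

subsection \<open>Pushforward\<close>

lemma push_hit:
  assumes \<psi>: "\<psi> \<in> fimor G p q" and \<phi>: "\<phi> \<in> fimor G n p" and F: "F \<in> carrier (P p)"
  shows "push p q \<psi> F (ficomp G n \<psi> \<phi>) = F \<phi>"
proof -
  have S: "{\<phi>' \<in> fimor G n p. ficomp G n \<psi> \<phi>' = ficomp G n \<psi> \<phi>} = {\<phi>}"
    using ficomp_cancel[OF \<psi> _ \<phi>] \<phi> by auto
  have Fc: "F \<phi> \<in> carrier W" using F \<phi> by (simp add: P_carrier)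
  interpret W: module R W by (rule Wm)
  show ?thesis unfolding Mpush_def using ficomp_mor[OF \<phi> \<psi>] S Fc
    by (simp add: W.finsum_insert)
qed

lemma push_miss:
  assumes "\<chi> \<in> fimor G n q" and "\<chi> \<notin> ficomp G n \<psi> ` fimor G n p"
  shows "push p q \<psi> F \<chi> = \<zero>\<^bsub>W\<^esub>"
proof -
  have S: "{\<phi>' \<in> fimor G n p. ficomp G n \<psi> \<phi>' = \<chi>} = {}" using assms by auto
  interpret W: module R W by (rule Wm)
  have "push p q \<psi> F \<chi> = finsum W F {\<phi>' \<in> fimor G n p. ficomp G n \<psi> \<phi>' = \<chi>}"
    unfolding Mpush_def using assms(1) by simp
  also have "\<dots> = \<zero>\<^bsub>W\<^esub>" by (simp only: S W.finsum_empty)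
  finally show ?thesis .
qed

lemma push_out: "\<chi> \<notin> fimor G n q \<Longrightarrow> push p q \<psi> F \<chi> = undefined"
  by (simp add: Mpush_def)

lemma push_cases:
  assumes \<psi>: "\<psi> \<in> fimor G p q" and \<chi>: "\<chi> \<in> fimor G n q"
  obtains (hit) \<phi> where "\<phi> \<in> fimor G n p" "\<chi> = ficomp G n \<psi> \<phi>"
    | (miss) "\<chi> \<notin> ficomp G n \<psi> ` fimor G n p"
  by blast

lemma push_carrier:
  assumes \<psi>: "\<psi> \<in> fimor G p q" and F: "F \<in> carrier (P p)"
  shows "push p q \<psi> F \<in> carrier (P q)"
proof -
  interpret W: module R W by (rule Wm)
  have vals: "push p q \<psi> F \<chi> \<in> carrier W" if \<chi>: "\<chi> \<in> fimor G n q" for \<chi>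
    using \<psi> \<chi>
  proof (cases rule: push_cases)
    case (hit \<phi>) then show ?thesis using push_hit[OF \<psi> hit(1) F] F by (simp add: P_carrier)
  next
    case miss then show ?thesis using push_miss[OF \<chi> miss] by simp
  qed
  have "sp q (push p q \<psi> F) \<subseteq> ficomp G n \<psi> ` sp p F"
  proof
    fix \<chi> assume "\<chi> \<in> sp q (push p q \<psi> F)"
    then have \<chi>: "\<chi> \<in> fimor G n q" and nz: "push p q \<psi> F \<chi> \<noteq> \<zero>\<^bsub>W\<^esub>" by (auto simp: supp_def)
    from \<psi> \<chi> show "\<chi> \<in> ficomp G n \<psi> ` sp p F"
    proof (cases rule: push_cases)
      case (hit \<phi>) then show ?thesis using push_hit[OF \<psi> hit(1) F] nz by (auto simp: supp_def)
    next
      case miss then show ?thesis using push_miss[OF \<chi> miss] nz by simp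
    qed
  qed
  moreover have "finite (sp p F)" using F by (simp add: P_carrier)
  ultimately have "finite (sp q (push p q \<psi> F))" using finite_subset by blast
  then show ?thesis using vals by (simp add: P_carrier push_out)
qed

lemma push_linmap:
  assumes \<psi>: "\<psi> \<in> fimor G p q"
  shows "linmap R (P p) (P q) (push p q \<psi>)"
proof (rule linmapI)
  interpret W: module R W by (rule Wm)
  show "push p q \<psi> x \<in> carrier (P q)" if "x \<in> carrier (P p)" for x using push_carrier[OF \<psi> that] .
  fix x y assume x: "x \<in> carrier (P p)" and y: "y \<in> carrier (P p)"
  have xy: "x \<oplus>\<^bsub>P p\<^esub> y \<in> carrier (P p)" using x y module.axioms(2)[OF P_module]
    by (simp add: abelian_groupE(1))
  show "push p q \<psi> (x \<oplus>\<^bsub>P p\<^esub> y) = push p q \<psi> x \<oplus>\<^bsub>P q\<^esub> push p q \<psi> y"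
  proof (rule ext)
    fix \<chi> show "push p q \<psi> (x \<oplus>\<^bsub>P p\<^esub> y) \<chi> = (push p q \<psi> x \<oplus>\<^bsub>P q\<^esub> push p q \<psi> y) \<chi>"
    proof (cases "\<chi> \<in> fimor G n q")
      case False then show ?thesis by (simp add: push_out P_add)
    next
      case \<chi>: True
      from \<psi> \<chi> show ?thesis
      proof (cases rule: push_cases)
        case (hit \<phi>) then show ?thesis
          using push_hit[OF \<psi> hit(1) x] push_hit[OF \<psi> hit(1) y] push_hit[OF \<psi> hit(1) xy] \<chi>
          by (simp add: P_add)
      next
        case miss then show ?thesis using push_miss[OF \<chi> miss] \<chi> by (simp add: P_add)
      qed
    qed
  qed
next
  interpret W: module R W by (rule Wm)
  fix a x assume a: "a \<in> carrier R" and x: "x \<in> carrier (P p)"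
  have ax: "a \<odot>\<^bsub>P p\<^esub> x \<in> carrier (P p)" using module.smult_closed[OF P_module a x] .
  show "push p q \<psi> (a \<odot>\<^bsub>P p\<^esub> x) = a \<odot>\<^bsub>P q\<^esub> push p q \<psi> x"
  proof (rule ext)
    fix \<chi> show "push p q \<psi> (a \<odot>\<^bsub>P p\<^esub> x) \<chi> = (a \<odot>\<^bsub>P q\<^esub> push p q \<psi> x) \<chi>"
    proof (cases "\<chi> \<in> fimor G n q")
      case False then show ?thesis by (simp add: push_out P_smult)
    next
      case \<chi>: True
      from \<psi> \<chi> show ?thesis
      proof (cases rule: push_cases)
        case (hit \<phi>) then show ?thesis
          using push_hit[OF \<psi> hit(1) x] push_hit[OF \<psi> hit(1) ax] \<chi>
          by (simp add: P_smult)
      next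
        case miss then show ?thesis using push_miss[OF \<chi> miss] \<chi> a by (simp add: P_smult)
      qed
    qed
  qed
qed

lemma push_ds:
  assumes \<psi>: "\<psi> \<in> fimor G p q" and \<phi>: "\<phi> \<in> fimor G n p" and w: "w \<in> carrier W"
  shows "push p q \<psi> (ds p \<phi> w) = ds q (ficomp G n \<psi> \<phi>) w"
proof (rule P_eqI)
  show "push p q \<psi> (ds p \<phi> w) \<in> carrier (P q)" using push_carrier[OF \<psi> ds_carrier[OF \<phi> w]] .
  show "ds q (ficomp G n \<psi> \<phi>) w \<in> carrier (P q)" using ds_carrier[OF ficomp_mor[OF \<phi> \<psi>] w] .
  fix \<chi> assume \<chi>: "\<chi> \<in> fimor G n q"
  from \<psi> \<chi> show "push p q \<psi> (ds p \<phi> w) \<chi> = ds q (ficomp G n \<psi> \<phi>) w \<chi>"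
  proof (cases rule: push_cases)
    case (hit \<phi>')
    have "(\<phi>' = \<phi>) = (ficomp G n \<psi> \<phi>' = ficomp G n \<psi> \<phi>)"
      using ficomp_cancel[OF \<psi> hit(1) \<phi>] by auto
    then show ?thesis using push_hit[OF \<psi> hit(1) ds_carrier[OF \<phi> w]] hit \<chi>
      by (simp add: ds_apply)
  next
    case miss then show ?thesis using push_miss[OF \<chi> miss] \<chi> \<phi> by (auto simp: ds_apply)
  qed
qed

lemma push_comp:
  assumes \<psi>: "\<psi> \<in> fimor G p q" and \<psi>': "\<psi>' \<in> fimor G q r" and F: "F \<in> carrier (P p)"
  shows "push p r (ficomp G p \<psi>' \<psi>) F = push q r \<psi>' (push p q \<psi> F)"
proof -
  have "push p r (ficomp G p \<psi>' \<psi>) F = (push q r \<psi>' \<circ> push p q \<psi>) F"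
proof (rule P_lin_eq[OF P_module _ _ _ F])
  show "linmap R (P p) (P r) (push p r (ficomp G p \<psi>' \<psi>))"
    by (rule push_linmap[OF ficomp_mor[OF \<psi> \<psi>']])
  show "linmap R (P p) (P r) (push q r \<psi>' \<circ> push p q \<psi>)"
    by (rule linmap_comp[OF push_linmap[OF \<psi>] push_linmap[OF \<psi>']])
  fix \<phi> w assume \<phi>: "\<phi> \<in> fimor G n p" and w: "w \<in> carrier W"
  show "push p r (ficomp G p \<psi>' \<psi>) (ds p \<phi> w) = (push q r \<psi>' \<circ> push p q \<psi>) (ds p \<phi> w)"
    using push_ds[OF ficomp_mor[OF \<psi> \<psi>'] \<phi> w] push_ds[OF \<psi> \<phi> w]
      push_ds[OF \<psi>' ficomp_mor[OF \<phi> \<psi>] w] ficomp_assoc[OF \<phi> \<psi> \<psi>']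
    by simp
qed
  then show ?thesis by simp
qed

lemma push_id:
  assumes F: "F \<in> carrier (P p)"
  shows "push p p (fiid G p) F = F"
proof -
  have "push p p (fiid G p) F = id F"
  proof (rule P_lin_eq[OF P_module _ _ _ F])
    show "linmap R (P p) (P p) (push p p (fiid G p))" by (rule push_linmap[OF fiid_mor])
    show "linmap R (P p) (P p) id" by (rule linmapI) auto
    fix \<phi> w assume \<phi>: "\<phi> \<in> fimor G n p" and w: "w \<in> carrier W"
    show "push p p (fiid G p) (ds p \<phi> w) = id (ds p \<phi> w)"
      using push_ds[OF fiid_mor \<phi> w] fiid_left[OF \<phi>] by simp
  qed
  then show ?thesis by simp
qed

end


lemma zero_submodule:
  assumes X: "module R X" shows "submodule {\<zero>\<^bsub>X\<^esub>} R X"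
proof -
  interpret X: module R X by fact
  show ?thesis by (rule X.submoduleI) (auto simp: X.neg_zero_iff)
qed

context pctx
begin

definition evg :: "('k, 'x) module \<Rightarrow> ('g fimor \<Rightarrow> 'w \<Rightarrow> 'x) \<Rightarrow> nat \<Rightarrow> ('g fimor \<Rightarrow> 'w) \<Rightarrow> 'x" where
  "evg X act p F = finsum X (\<lambda>\<phi>. act \<phi> (F \<phi>)) (sp p F)"

lemma P_val: "F \<in> carrier (P p) \<Longrightarrow> \<phi> \<in> fimor G n p \<Longrightarrow> F \<phi> \<in> carrier W"
  by (simp add: P_carrier)

lemma sp_fin: "F \<in> carrier (P p) \<Longrightarrow> finite (sp p F)"
  by (simp add: P_carrier)

lemma sp_sub: "sp p F \<subseteq> fimor G n p" by (auto simp: supp_def)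
lemma sp_memD: "\<phi> \<in> sp p F \<Longrightarrow> \<phi> \<in> fimor G n p" by (simp add: supp_def)

lemma evg_superset:
  assumes X: "module R X" and act: "\<And>\<phi>. \<phi> \<in> fimor G n p \<Longrightarrow> linmap R W X (act \<phi>)"
    and F: "F \<in> carrier (P p)" and S: "finite S" "sp p F \<subseteq> S" "S \<subseteq> fimor G n p"
  shows "evg X act p F = finsum X (\<lambda>\<phi>. act \<phi> (F \<phi>)) S"
proof -
  interpret X: module R X by fact
  interpret W: module R W by (rule Wm)
  show ?thesis unfolding evg_def
  proof (rule X.add.finprod_mono_neutral_cong_left[OF S(1) S(2)])
    fix i assume i: "i \<in> S - sp p F"
    have iI: "i \<in> fimor G n p" using i S(3) by blast
    then have "F i = \<zero>\<^bsub>W\<^esub>" using i by (simp add: supp_def)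
    then show "act i (F i) = \<zero>\<^bsub>X\<^esub>" using linmap_zero[OF Wm X act[OF iI]] by simp
  next
    show "(\<lambda>\<phi>. act \<phi> (F \<phi>)) \<in> S \<rightarrow> carrier X"
      using S(3) linmapD(1)[OF act] P_val[OF F] by auto
  qed simp
qed

lemma evg_closed:
  assumes X: "module R X" and act: "\<And>\<phi>. \<phi> \<in> fimor G n p \<Longrightarrow> linmap R W X (act \<phi>)"
    and F: "F \<in> carrier (P p)"
  shows "evg X act p F \<in> carrier X"
proof -
  interpret X: module R X by fact
  show ?thesis unfolding evg_def
    by (rule X.finsum_closed) (use sp_memD linmapD(1)[OF act] P_val[OF F] in auto)
qed

lemma evg_linmap:
  assumes X: "module R X" and act: "\<And>\<phi>. \<phi> \<in> fimor G n p \<Longrightarrow> linmap R W X (act \<phi>)"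
  shows "linmap R (P p) X (evg X act p)"
proof (rule linmapI)
  interpret X: module R X by fact
  interpret W: module R W by (rule Wm)
  interpret Pp: module R "P p" by (rule P_module)
  show "evg X act p F \<in> carrier X" if "F \<in> carrier (P p)" for F by (rule evg_closed[OF X act that])
  fix F H assume F: "F \<in> carrier (P p)" and H: "H \<in> carrier (P p)"
  let ?S = "sp p F \<union> sp p H"
  have fin: "finite ?S" using sp_fin[OF F] sp_fin[OF H] by simp
  have Ssub: "?S \<subseteq> fimor G n p" using sp_sub by auto
  have SsubD: "\<phi> \<in> ?S \<Longrightarrow> \<phi> \<in> fimor G n p" for \<phi> using sp_memD by blast
  have FH: "F \<oplus>\<^bsub>P p\<^esub> H \<in> carrier (P p)" using F H by simp
  have spFH: "sp p (F \<oplus>\<^bsub>P p\<^esub> H) \<subseteq> ?S"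
    using P_val[OF F] P_val[OF H] by (auto simp: supp_def P_add)
  have "evg X act p (F \<oplus>\<^bsub>P p\<^esub> H) = finsum X (\<lambda>\<phi>. act \<phi> ((F \<oplus>\<^bsub>P p\<^esub> H) \<phi>)) ?S"
    by (rule evg_superset[OF X act FH fin spFH Ssub])
  also have "\<dots> = finsum X (\<lambda>\<phi>. act \<phi> (F \<phi>) \<oplus>\<^bsub>X\<^esub> act \<phi> (H \<phi>)) ?S"
    by (rule X.finsum_cong') (use SsubD P_val[OF F] P_val[OF H] linmapD[OF act] in \<open>auto simp: P_add\<close>)
  also have "\<dots> = finsum X (\<lambda>\<phi>. act \<phi> (F \<phi>)) ?S \<oplus>\<^bsub>X\<^esub> finsum X (\<lambda>\<phi>. act \<phi> (H \<phi>)) ?S"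
    by (rule X.finsum_addf) (use SsubD P_val[OF F] P_val[OF H] linmapD[OF act] in auto)
  also have "\<dots> = evg X act p F \<oplus>\<^bsub>X\<^esub> evg X act p H"
    using evg_superset[OF X act F fin _ Ssub] evg_superset[OF X act H fin _ Ssub] by simp
  finally show "evg X act p (F \<oplus>\<^bsub>P p\<^esub> H) = evg X act p F \<oplus>\<^bsub>X\<^esub> evg X act p H" .
next
  interpret X: module R X by fact
  interpret W: module R W by (rule Wm)
  interpret Pp: module R "P p" by (rule P_module)
  fix a F assume a: "a \<in> carrier R" and F: "F \<in> carrier (P p)"
  have fin: "finite (sp p F)" using sp_fin[OF F] .
  have aF: "a \<odot>\<^bsub>P p\<^esub> F \<in> carrier (P p)" using a F by simp
  have sp: "sp p (a \<odot>\<^bsub>P p\<^esub> F) \<subseteq> sp p F"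
    using P_val[OF F] a by (auto simp: supp_def P_smult)
  have "evg X act p (a \<odot>\<^bsub>P p\<^esub> F) = finsum X (\<lambda>\<phi>. act \<phi> ((a \<odot>\<^bsub>P p\<^esub> F) \<phi>)) (sp p F)"
    by (rule evg_superset[OF X act aF fin sp sp_sub])
  also have "\<dots> = finsum X (\<lambda>\<phi>. a \<odot>\<^bsub>X\<^esub> act \<phi> (F \<phi>)) (sp p F)"
    by (rule X.finsum_cong') (use sp_memD P_val[OF F] linmapD[OF act] a in \<open>auto simp: P_smult\<close>)
  also have "\<dots> = a \<odot>\<^bsub>X\<^esub> evg X act p F"
    unfolding evg_def
    by (rule X.finsum_smult_ldistr[symmetric, OF fin a]) (use sp_memD P_val[OF F] linmapD[OF act] in auto)
  finally show "evg X act p (a \<odot>\<^bsub>P p\<^esub> F) = a \<odot>\<^bsub>X\<^esub> evg X act p F" .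
qed

lemma evg_ds:
  assumes X: "module R X" and act: "\<And>\<phi>. \<phi> \<in> fimor G n p \<Longrightarrow> linmap R W X (act \<phi>)"
    and \<phi>: "\<phi> \<in> fimor G n p" and w: "w \<in> carrier W"
  shows "evg X act p (ds p \<phi> w) = act \<phi> w"
proof -
  interpret X: module R X by fact
  have sp: "sp p (ds p \<phi> w) \<subseteq> {\<phi>}"
  proof
    fix \<chi> assume "\<chi> \<in> sp p (ds p \<phi> w)" then show "\<chi> \<in> {\<phi>}"
      by (cases "\<chi> = \<phi>") (auto simp add: supp_def ds_apply)
  qed
  have "evg X act p (ds p \<phi> w) = finsum X (\<lambda>\<chi>. act \<chi> (ds p \<phi> w \<chi>)) {\<phi>}"
    by (rule evg_superset[OF X act ds_carrier[OF \<phi> w] _ sp]) (use \<phi> in auto)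
  also have "\<dots> = act \<phi> w" using \<phi> linmapD(1)[OF act[OF \<phi>] w] by (simp add: ds_apply)
  finally show ?thesis .
qed

end

locale mctx = pctx G R W n for G :: "'g monoid" (structure) and R :: "'k ring" and W :: "('k, 'w) module" and n :: nat +
  fixes \<rho> :: "'g fimor \<Rightarrow> 'w \<Rightarrow> 'w"
  assumes gm: "grp_mod R G n W \<rho>"
begin

abbreviation N where "N p \<equiv> Mrel R G n W \<rho> p"

lemma rho_linmap: "\<sigma> \<in> fimor G n n \<Longrightarrow> linmap R W W (\<rho> \<sigma>)"
  using gm by (simp add: grp_mod_def)
lemma rho_id: "w \<in> carrier W \<Longrightarrow> \<rho> (fiid G n) w = w"
  using gm by (simp add: grp_mod_def)
lemma rho_comp: "\<sigma> \<in> fimor G n n \<Longrightarrow> \<tau> \<in> fimor G n n \<Longrightarrow> w \<in> carrier W \<Longrightarrow>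
    \<rho> (ficomp G n \<sigma> \<tau>) w = \<rho> \<sigma> (\<rho> \<tau> w)"
  using gm by (simp add: grp_mod_def)
lemma rho_closed: "\<sigma> \<in> fimor G n n \<Longrightarrow> w \<in> carrier W \<Longrightarrow> \<rho> \<sigma> w \<in> carrier W"
  using linmapD(1)[OF rho_linmap] .

definition gens where
  "gens p = {ds p (ficomp G n \<phi> \<sigma>) w \<ominus>\<^bsub>P p\<^esub> ds p \<phi> (\<rho> \<sigma> w)
      | \<phi> \<sigma> w. \<phi> \<in> fimor G n p \<and> \<sigma> \<in> fimor G n n \<and> w \<in> carrier W}"

lemma N_def': "N p = kspan R (P p) (gens p)"
  by (simp add: Mrel_def gens_def)

lemma gens_sub: "gens p \<subseteq> carrier (P p)"
proof -
  interpret Pp: module R "P p" by (rule P_module)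
  show ?thesis
  proof
    fix g assume "g \<in> gens p"
    then obtain \<phi> \<sigma> w where g: "g = ds p (ficomp G n \<phi> \<sigma>) w \<ominus>\<^bsub>P p\<^esub> ds p \<phi> (\<rho> \<sigma> w)"
      and \<phi>: "\<phi> \<in> fimor G n p" and \<sigma>: "\<sigma> \<in> fimor G n n" and w: "w \<in> carrier W"
      unfolding gens_def by blast
    show "g \<in> carrier (P p)" unfolding g
      by (rule Pp.minus_closed[OF ds_carrier[OF ficomp_mor[OF \<sigma> \<phi>] w] ds_carrier[OF \<phi> rho_closed[OF \<sigma> w]]])
  qed
qed

lemma N_sub: "submodule (N p) R (P p)"
  unfolding N_def' by (rule kspan_sub[OF P_module gens_sub])

lemma gen_in: "\<phi> \<in> fimor G n p \<Longrightarrow> \<sigma> \<in> fimor G n n \<Longrightarrow> w \<in> carrier W \<Longrightarrow>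
    ds p (ficomp G n \<phi> \<sigma>) w \<ominus>\<^bsub>P p\<^esub> ds p \<phi> (\<rho> \<sigma> w) \<in> N p"
proof -
  assume a: "\<phi> \<in> fimor G n p" "\<sigma> \<in> fimor G n n" "w \<in> carrier W"
  have "ds p (ficomp G n \<phi> \<sigma>) w \<ominus>\<^bsub>P p\<^esub> ds p \<phi> (\<rho> \<sigma> w) \<in> gens p"
    unfolding gens_def using a by blast
  then show ?thesis unfolding N_def' using kspan_incl[of "gens p" R "P p"] by blast
qed

lemma N_least: "submodule X R (P p) \<Longrightarrow> gens p \<subseteq> X \<Longrightarrow> N p \<subseteq> X"
  unfolding N_def' by (rule kspan_least)

lemma quot_p: "quot R (P p) (N p)"
  by (rule quot.intro[OF P_module]) (rule quot_axioms.intro[OF N_sub])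

lemma evg_N:
  assumes X: "module R X" and act: "\<And>\<phi>. \<phi> \<in> fimor G n p \<Longrightarrow> linmap R W X (act \<phi>)"
    and compat: "\<And>\<phi> \<sigma> w. \<phi> \<in> fimor G n p \<Longrightarrow> \<sigma> \<in> fimor G n n \<Longrightarrow> w \<in> carrier W \<Longrightarrow>
        act (ficomp G n \<phi> \<sigma>) w = act \<phi> (\<rho> \<sigma> w)"
    and F: "F \<in> N p"
  shows "evg X act p F = \<zero>\<^bsub>X\<^esub>"
proof -
  interpret X: module R X by fact
  let ?K = "{F \<in> carrier (P p). evg X act p F \<in> {\<zero>\<^bsub>X\<^esub>}}"
  have K: "submodule ?K R (P p)"
    by (rule linmap_kernel_sub[OF P_module X evg_linmap[where X=X and act=act and p=p, OF X act] zero_submodule[OF X]])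
  have "gens p \<subseteq> ?K"
  proof
    fix g assume "g \<in> gens p"
    then obtain \<phi> \<sigma> w where g: "g = ds p (ficomp G n \<phi> \<sigma>) w \<ominus>\<^bsub>P p\<^esub> ds p \<phi> (\<rho> \<sigma> w)"
      and \<phi>: "\<phi> \<in> fimor G n p" and \<sigma>: "\<sigma> \<in> fimor G n n" and w: "w \<in> carrier W"
      unfolding gens_def by blast
    have c1: "ds p (ficomp G n \<phi> \<sigma>) w \<in> carrier (P p)" using ds_carrier[OF ficomp_mor[OF \<sigma> \<phi>] w] .
    have c2: "ds p \<phi> (\<rho> \<sigma> w) \<in> carrier (P p)" using ds_carrier[OF \<phi> rho_closed[OF \<sigma> w]] .
    have "evg X act p g = act (ficomp G n \<phi> \<sigma>) w \<ominus>\<^bsub>X\<^esub> act \<phi> (\<rho> \<sigma> w)"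
    proof -
      have lm: "linmap R (P p) X (evg X act p)" by (rule evg_linmap[OF X act])
      show ?thesis unfolding g linmap_minus[OF P_module X lm c1 c2]
      using evg_ds[where X=X and act=act and p=p, OF X act ficomp_mor[OF \<sigma> \<phi>] w] evg_ds[where X=X and act=act and p=p, OF X act \<phi> rho_closed[OF \<sigma> w]] by simp
    qed
    also have "\<dots> = \<zero>\<^bsub>X\<^esub>" using compat[OF \<phi> \<sigma> w] linmapD(1)[OF act[OF \<phi>] rho_closed[OF \<sigma> w]]
      by (simp add: X.r_neg X.minus_eq)
    finally show "g \<in> ?K" using gens_sub \<open>g \<in> gens p\<close> by auto
  qed
  then have "N p \<subseteq> ?K" by (rule N_least[OF K])
  then show ?thesis using F by auto
qed

end


lemma (in abelian_group) minus_eq0: "x \<in> carrier G \<Longrightarrow> y \<in> carrier G \<Longrightarrow> x \<ominus> y = \<zero> \<Longrightarrow> x = y"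
proof -
  assume x: "x \<in> carrier G" and y: "y \<in> carrier G" and e: "x \<ominus> y = \<zero>"
  have "x = (x \<ominus> y) \<oplus> y" using x y by (simp add: minus_eq a_assoc l_neg)
  then show ?thesis using e y by simp
qed

context mctx
begin

lemma push_N:
  assumes \<psi>: "\<psi> \<in> fimor G p q" and F: "F \<in> N p"
  shows "push p q \<psi> F \<in> N q"
proof -
  interpret Pq: module R "P q" by (rule P_module)
  let ?K = "{F \<in> carrier (P p). push p q \<psi> F \<in> N q}"
  have K: "submodule ?K R (P p)"
    by (rule linmap_kernel_sub[OF P_module P_module push_linmap[OF \<psi>] N_sub])
  have "gens p \<subseteq> ?K"
  proof
    fix g assume gin: "g \<in> gens p"
    then obtain \<phi> \<sigma> w where g: "g = ds p (ficomp G n \<phi> \<sigma>) w \<ominus>\<^bsub>P p\<^esub> ds p \<phi> (\<rho> \<sigma> w)"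
      and \<phi>: "\<phi> \<in> fimor G n p" and \<sigma>: "\<sigma> \<in> fimor G n n" and w: "w \<in> carrier W"
      unfolding gens_def by blast
    have c1: "ds p (ficomp G n \<phi> \<sigma>) w \<in> carrier (P p)" using ds_carrier[OF ficomp_mor[OF \<sigma> \<phi>] w] .
    have c2: "ds p \<phi> (\<rho> \<sigma> w) \<in> carrier (P p)" using ds_carrier[OF \<phi> rho_closed[OF \<sigma> w]] .
    have "push p q \<psi> g = ds q (ficomp G n \<psi> (ficomp G n \<phi> \<sigma>)) w \<ominus>\<^bsub>P q\<^esub> ds q (ficomp G n \<psi> \<phi>) (\<rho> \<sigma> w)"
      unfolding g linmap_minus[OF P_module P_module push_linmap[OF \<psi>] c1 c2]
      using push_ds[OF \<psi> ficomp_mor[OF \<sigma> \<phi>] w] push_ds[OF \<psi> \<phi> rho_closed[OF \<sigma> w]] by simp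
    also have "\<dots> = ds q (ficomp G n (ficomp G n \<psi> \<phi>) \<sigma>) w \<ominus>\<^bsub>P q\<^esub> ds q (ficomp G n \<psi> \<phi>) (\<rho> \<sigma> w)"
      using ficomp_assoc[OF \<sigma> \<phi> \<psi>] by simp
    also have "\<dots> \<in> N q" by (rule gen_in[OF ficomp_mor[OF \<phi> \<psi>] \<sigma> w])
    finally show "g \<in> ?K" using gens_sub gin by auto
  qed
  then have "N p \<subseteq> ?K" by (rule N_least[OF K])
  then show ?thesis using F by auto
qed

subsection \<open>Orbit representatives\<close>

definition orb where "orb \<phi> = {ficomp G n \<phi> \<sigma> | \<sigma>. \<sigma> \<in> fimor G n n}"
definition rr where "rr \<phi> = (SOME \<chi>. \<chi> \<in> orb \<phi>)"
definition ss where "ss \<phi> = (THE \<sigma>. \<sigma> \<in> fimor G n n \<and> ficomp G n (rr \<phi>) \<sigma> = \<phi>)"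

lemma orb_self: "\<phi> \<in> fimor G n p \<Longrightarrow> \<phi> \<in> orb \<phi>"
proof -
  assume a: "\<phi> \<in> fimor G n p"
  have "\<phi> = ficomp G n \<phi> (fiid G n)" using fiid_right[OF a] by simp
  then show ?thesis unfolding orb_def using fiid_mor by blast
qed

lemma orb_mor: "\<phi> \<in> fimor G n p \<Longrightarrow> \<chi> \<in> orb \<phi> \<Longrightarrow> \<chi> \<in> fimor G n p"
  unfolding orb_def using ficomp_mor by blast

lemma orb_eq:
  assumes \<phi>: "\<phi> \<in> fimor G n p" and \<chi>: "\<chi> \<in> orb \<phi>"
  shows "orb \<chi> = orb \<phi>"
proof -
  obtain \<sigma> where \<sigma>: "\<sigma> \<in> fimor G n n" and e: "\<chi> = ficomp G n \<phi> \<sigma>" using \<chi> unfolding orb_def by blast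
  obtain \<tau> where \<tau>: "\<tau> \<in> fimor G n n" and st: "ficomp G n \<sigma> \<tau> = fiid G n" using right_inv[OF \<sigma>] by blast
  show ?thesis
  proof
    show "orb \<chi> \<subseteq> orb \<phi>"
    proof
      fix x assume "x \<in> orb \<chi>"
      then obtain \<sigma>' where \<sigma>': "\<sigma>' \<in> fimor G n n" and x: "x = ficomp G n \<chi> \<sigma>'" unfolding orb_def by blast
      have "x = ficomp G n \<phi> (ficomp G n \<sigma> \<sigma>')" unfolding x e by (rule ficomp_assoc[OF \<sigma>' \<sigma> \<phi>])
      then show "x \<in> orb \<phi>" unfolding orb_def using ficomp_mor[OF \<sigma>' \<sigma>] by blast
    qed
  next
    show "orb \<phi> \<subseteq> orb \<chi>"
    proof
      fix x assume "x \<in> orb \<phi>"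
      then obtain \<sigma>' where \<sigma>': "\<sigma>' \<in> fimor G n n" and x: "x = ficomp G n \<phi> \<sigma>'" unfolding orb_def by blast
      have "ficomp G n \<chi> (ficomp G n \<tau> \<sigma>') = ficomp G n (ficomp G n \<chi> \<tau>) \<sigma>'"
        by (rule ficomp_assoc[OF \<sigma>' \<tau> ficomp_mor[OF \<sigma> \<phi>, folded e], symmetric])
      also have "ficomp G n \<chi> \<tau> = \<phi>"
        unfolding e using ficomp_assoc[OF \<tau> \<sigma> \<phi>] st fiid_right[OF \<phi>] by simp
      finally have "x = ficomp G n \<chi> (ficomp G n \<tau> \<sigma>')" using x by simp
      then show "x \<in> orb \<chi>" unfolding orb_def using ficomp_mor[OF \<sigma>' \<tau>] by blast
    qed
  qed
qed

lemma rr_orb: "\<phi> \<in> fimor G n p \<Longrightarrow> rr \<phi> \<in> orb \<phi>"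
  unfolding rr_def by (rule someI[of "\<lambda>\<chi>. \<chi> \<in> orb \<phi>" \<phi>]) (rule orb_self)

lemma rr_mor: "\<phi> \<in> fimor G n p \<Longrightarrow> rr \<phi> \<in> fimor G n p"
  using orb_mor rr_orb by blast

lemma rr_eq: "\<phi> \<in> fimor G n p \<Longrightarrow> \<chi> \<in> orb \<phi> \<Longrightarrow> rr \<chi> = rr \<phi>"
  unfolding rr_def using orb_eq by simp

lemma rr_comp: "\<phi> \<in> fimor G n p \<Longrightarrow> \<sigma> \<in> fimor G n n \<Longrightarrow> rr (ficomp G n \<phi> \<sigma>) = rr \<phi>"
  by (rule rr_eq) (unfold orb_def, blast+)

lemma rr_idem: "\<phi> \<in> fimor G n p \<Longrightarrow> rr (rr \<phi>) = rr \<phi>"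
  using rr_eq rr_orb by blast

lemma ss_ex: assumes \<phi>: "\<phi> \<in> fimor G n p"
  shows "\<exists>\<sigma>. \<sigma> \<in> fimor G n n \<and> ficomp G n (rr \<phi>) \<sigma> = \<phi>"
proof -
  obtain \<tau> where \<tau>: "\<tau> \<in> fimor G n n" and e: "rr \<phi> = ficomp G n \<phi> \<tau>"
    using rr_orb[OF \<phi>] unfolding orb_def by blast
  obtain \<tau>' where \<tau>': "\<tau>' \<in> fimor G n n" and st: "ficomp G n \<tau> \<tau>' = fiid G n" using right_inv[OF \<tau>] by blast
  have "ficomp G n (rr \<phi>) \<tau>' = \<phi>"
    unfolding e using ficomp_assoc[OF \<tau>' \<tau> \<phi>] st fiid_right[OF \<phi>] by simp
  then show ?thesis using \<tau>' by blast
qed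

lemma ss_prop: assumes \<phi>: "\<phi> \<in> fimor G n p"
  shows "ss \<phi> \<in> fimor G n n \<and> ficomp G n (rr \<phi>) (ss \<phi>) = \<phi>"
proof -
  have "\<exists>!\<sigma>. \<sigma> \<in> fimor G n n \<and> ficomp G n (rr \<phi>) \<sigma> = \<phi>"
  proof (rule ex_ex1I)
    show "\<exists>\<sigma>. \<sigma> \<in> fimor G n n \<and> ficomp G n (rr \<phi>) \<sigma> = \<phi>" by (rule ss_ex[OF \<phi>])
  next
    fix x y assume x: "x \<in> fimor G n n \<and> ficomp G n (rr \<phi>) x = \<phi>" and y: "y \<in> fimor G n n \<and> ficomp G n (rr \<phi>) y = \<phi>"
    then have e: "ficomp G n (rr \<phi>) x = ficomp G n (rr \<phi>) y" by simp
    show "x = y" using ficomp_cancel[OF rr_mor[OF \<phi>] conjunct1[OF x] conjunct1[OF y] e] .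
  qed
  then show ?thesis unfolding ss_def by (rule theI')
qed

lemma ss_unique: "\<phi> \<in> fimor G n p \<Longrightarrow> \<sigma> \<in> fimor G n n \<Longrightarrow> ficomp G n (rr \<phi>) \<sigma> = \<phi> \<Longrightarrow> ss \<phi> = \<sigma>"
proof -
  assume a: "\<phi> \<in> fimor G n p" "\<sigma> \<in> fimor G n n" "ficomp G n (rr \<phi>) \<sigma> = \<phi>"
  have "ficomp G n (rr \<phi>) (ss \<phi>) = ficomp G n (rr \<phi>) \<sigma>" using ss_prop[OF a(1)] a(3) by simp
  then show ?thesis using ficomp_cancel[OF rr_mor[OF a(1)] _ a(2)] ss_prop[OF a(1)] by blast
qed

lemma ss_comp:
  assumes \<phi>: "\<phi> \<in> fimor G n p" and \<sigma>: "\<sigma> \<in> fimor G n n"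
  shows "ss (ficomp G n \<phi> \<sigma>) = ficomp G n (ss \<phi>) \<sigma>"
proof (rule ss_unique[OF ficomp_mor[OF \<sigma> \<phi>] ficomp_mor[OF \<sigma>]])
  show "ss \<phi> \<in> fimor G n n" using ss_prop[OF \<phi>] by blast
  have "ficomp G n (rr \<phi>) (ficomp G n (ss \<phi>) \<sigma>) = ficomp G n (ficomp G n (rr \<phi>) (ss \<phi>)) \<sigma>"
    using ficomp_assoc[OF \<sigma> _ rr_mor[OF \<phi>], of "ss \<phi>"] ss_prop[OF \<phi>] by simp
  also have "\<dots> = ficomp G n \<phi> \<sigma>" using ss_prop[OF \<phi>] by simp
  finally show "ficomp G n (rr (ficomp G n \<phi> \<sigma>)) (ficomp G n (ss \<phi>) \<sigma>) = ficomp G n \<phi> \<sigma>"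
    using rr_comp[OF \<phi> \<sigma>] by simp
qed

lemma ss_rep: "\<phi> \<in> fimor G n p \<Longrightarrow> rr \<phi> = \<phi> \<Longrightarrow> ss \<phi> = fiid G n"
proof -
  assume a: "\<phi> \<in> fimor G n p" "rr \<phi> = \<phi>"
  show ?thesis by (rule ss_unique[OF a(1) fiid_mor]) (simp add: a(2) fiid_right[OF a(1)])
qed

subsection \<open>The normal form operator\<close>

definition tact where "tact p \<phi> w = ds p (rr \<phi>) (\<rho> (ss \<phi>) w)"
definition T where "T p = evg (P p) (tact p) p"

lemma tact_linmap: "\<phi> \<in> fimor G n p \<Longrightarrow> linmap R W (P p) (tact p \<phi>)"
  unfolding tact_def
  using linmap_comp[OF rho_linmap ds_linmap[OF rr_mor]] ss_prop by (simp add: comp_def)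

lemma tact_compat: "\<phi> \<in> fimor G n p \<Longrightarrow> \<sigma> \<in> fimor G n n \<Longrightarrow> w \<in> carrier W \<Longrightarrow>
    tact p (ficomp G n \<phi> \<sigma>) w = tact p \<phi> (\<rho> \<sigma> w)"
  unfolding tact_def using rr_comp ss_comp rho_comp ss_prop by simp

lemma T_linmap: "linmap R (P p) (P p) (T p)"
  unfolding T_def by (rule evg_linmap[OF P_module tact_linmap])

lemma T_ds: "\<phi> \<in> fimor G n p \<Longrightarrow> w \<in> carrier W \<Longrightarrow> T p (ds p \<phi> w) = ds p (rr \<phi>) (\<rho> (ss \<phi>) w)"
  unfolding T_def using evg_ds[OF P_module tact_linmap] by (simp add: tact_def)

lemma T_N: "F \<in> N p \<Longrightarrow> T p F = \<zero>\<^bsub>P p\<^esub>"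
  unfolding T_def by (rule evg_N[OF P_module tact_linmap tact_compat])

lemma T_sub:
  assumes F: "F \<in> carrier (P p)"
  shows "F \<ominus>\<^bsub>P p\<^esub> T p F \<in> N p"
proof -
  have L: "linmap R (P p) (P p) (\<lambda>F. id F \<ominus>\<^bsub>P p\<^esub> T p F)"
    by (rule linmap_diff[OF P_module P_module _ T_linmap]) (rule linmapI, auto)
  have "(\<lambda>F. id F \<ominus>\<^bsub>P p\<^esub> T p F) F \<in> N p"
  proof (rule P_lin_sub[OF P_module L N_sub _ F])
    fix \<phi> w assume \<phi>: "\<phi> \<in> fimor G n p" and w: "w \<in> carrier W"
    have "ds p \<phi> w = ds p (ficomp G n (rr \<phi>) (ss \<phi>)) w" using ss_prop[OF \<phi>] by simp
    then show "id (ds p \<phi> w) \<ominus>\<^bsub>P p\<^esub> T p (ds p \<phi> w) \<in> N p"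
      using T_ds[OF \<phi> w] gen_in[OF rr_mor[OF \<phi>] conjunct1[OF ss_prop[OF \<phi>]] w] by simp
  qed
  then show ?thesis by simp
qed

definition reps where "reps p F \<longleftrightarrow> (\<forall>\<phi>\<in>sp p F. rr \<phi> = \<phi>)"

lemma T_fix:
  assumes F: "F \<in> carrier (P p)" and r: "reps p F"
  shows "T p F = F"
proof -
  interpret Pp: module R "P p" by (rule P_module)
  have "T p F = finsum (P p) (\<lambda>\<phi>. T p (ds p \<phi> (F \<phi>))) (sp p F)"
    by (rule P_lin_ext[OF P_module T_linmap F])
  also have "\<dots> = finsum (P p) (\<lambda>\<phi>. ds p \<phi> (F \<phi>)) (sp p F)"
  proof (rule Pp.finsum_cong')
    fix \<phi> assume \<phi>s: "\<phi> \<in> sp p F"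
    have \<phi>: "\<phi> \<in> fimor G n p" using sp_memD[OF \<phi>s] .
    have rr: "rr \<phi> = \<phi>" using r \<phi>s by (simp add: reps_def)
    show "T p (ds p \<phi> (F \<phi>)) = ds p \<phi> (F \<phi>)"
      using T_ds[OF \<phi> P_val[OF F \<phi>]] rr ss_rep[OF \<phi> rr] rho_id[OF P_val[OF F \<phi>]] by simp
  next
    show "(\<lambda>\<phi>. ds p \<phi> (F \<phi>)) \<in> sp p F \<rightarrow> carrier (P p)"
      using ds_carrier sp_memD P_val[OF F] by blast
  qed simp
  also have "\<dots> = F" by (rule P_decomp[OF F])
  finally show ?thesis .
qed

lemma T_reps:
  assumes F: "F \<in> carrier (P p)"
  shows "reps p (T p F)"
  unfolding reps_def
proof
  fix \<chi> assume \<chi>s: "\<chi> \<in> sp p (T p F)"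
  have \<chi>: "\<chi> \<in> fimor G n p" using sp_memD[OF \<chi>s] .
  show "rr \<chi> = \<chi>"
  proof (rule ccontr)
    assume nr: "rr \<chi> \<noteq> \<chi>"
    interpret W: module R W by (rule Wm)
    have cl: "(\<lambda>\<phi>. tact p \<phi> (F \<phi>)) \<in> sp p F \<rightarrow> carrier (P p)"
      using linmapD(1)[OF tact_linmap] sp_memD P_val[OF F] by blast
    have "T p F \<chi> = finsum W (\<lambda>\<phi>. tact p \<phi> (F \<phi>) \<chi>) (sp p F)"
      unfolding T_def evg_def by (rule P_finsum_apply[OF sp_fin[OF F] cl \<chi>])
    also have "\<dots> = \<zero>\<^bsub>W\<^esub>"
    proof (rule W.add.finprod_one_eqI)
      fix \<phi> assume \<phi>s: "\<phi> \<in> sp p F"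
      have \<phi>: "\<phi> \<in> fimor G n p" using sp_memD[OF \<phi>s] .
      have "\<chi> \<noteq> rr \<phi>" using nr rr_idem[OF \<phi>] by auto
      then show "tact p \<phi> (F \<phi>) \<chi> = \<zero>\<^bsub>W\<^esub>" using \<chi> by (simp add: tact_def ds_apply)
    qed
    finally show False using \<chi>s by (simp add: supp_def)
  qed
qed

lemma T_closed: "F \<in> carrier (P p) \<Longrightarrow> T p F \<in> carrier (P p)"
  using linmapD(1)[OF T_linmap] .

lemma N_iff_T:
  assumes F: "F \<in> carrier (P p)"
  shows "F \<in> N p \<longleftrightarrow> T p F = \<zero>\<^bsub>P p\<^esub>"
proof
  assume "F \<in> N p" then show "T p F = \<zero>\<^bsub>P p\<^esub>" by (rule T_N)
next
  interpret Pp: module R "P p" by (rule P_module)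
  assume "T p F = \<zero>\<^bsub>P p\<^esub>"
  then have "F \<ominus>\<^bsub>P p\<^esub> T p F = F" using F by (simp add: Pp.minus_eq quot.neg0[OF quot_p])
  then show "F \<in> N p" using T_sub[OF F] by simp
qed

lemma reps_unique:
  assumes F: "F \<in> carrier (P p)" and H: "H \<in> carrier (P p)" and rF: "reps p F" and rH: "reps p H"
    and d: "F \<ominus>\<^bsub>P p\<^esub> H \<in> N p"
  shows "F = H"
proof -
  interpret Pp: module R "P p" by (rule P_module)
  have "T p (F \<ominus>\<^bsub>P p\<^esub> H) = F \<ominus>\<^bsub>P p\<^esub> H"
    using linmap_minus[OF P_module P_module T_linmap F H] T_fix[OF F rF] T_fix[OF H rH] by simp
  then have "F \<ominus>\<^bsub>P p\<^esub> H = \<zero>\<^bsub>P p\<^esub>" using T_N[OF d] by simp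
  then show ?thesis using Pp.minus_eq0 F H by blast
qed

abbreviation evW where "evW \<equiv> evg W \<rho> n"

lemma evW_linmap: "linmap R (P n) W evW"
  by (rule evg_linmap[OF Wm rho_linmap])

lemma evW_ds: "\<sigma> \<in> fimor G n n \<Longrightarrow> w \<in> carrier W \<Longrightarrow> evW (ds n \<sigma> w) = \<rho> \<sigma> w"
  by (rule evg_ds[OF Wm rho_linmap])

lemma evW_N: "F \<in> N n \<Longrightarrow> evW F = \<zero>\<^bsub>W\<^esub>"
  by (rule evg_N[OF Wm rho_linmap rho_comp])

lemma evW_closed: "F \<in> carrier (P n) \<Longrightarrow> evW F \<in> carrier W"
  using linmapD(1)[OF evW_linmap] .

lemma push_evW:
  assumes \<psi>: "\<psi> \<in> fimor G n p" and x: "x \<in> carrier (P n)"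
  shows "push n p \<psi> x \<ominus>\<^bsub>P p\<^esub> ds p \<psi> (evW x) \<in> N p"
proof -
  have L: "linmap R (P n) (P p) (\<lambda>x. push n p \<psi> x \<ominus>\<^bsub>P p\<^esub> (ds p \<psi> \<circ> evW) x)"
    by (rule linmap_diff[OF P_module P_module push_linmap[OF \<psi>] linmap_comp[OF evW_linmap ds_linmap[OF \<psi>]]])
  have "(\<lambda>x. push n p \<psi> x \<ominus>\<^bsub>P p\<^esub> (ds p \<psi> \<circ> evW) x) x \<in> N p"
  proof (rule P_lin_sub[OF P_module L N_sub _ x])
    fix \<sigma> w assume \<sigma>: "\<sigma> \<in> fimor G n n" and w: "w \<in> carrier W"
    show "push n p \<psi> (ds n \<sigma> w) \<ominus>\<^bsub>P p\<^esub> (ds p \<psi> \<circ> evW) (ds n \<sigma> w) \<in> N p"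
      using push_ds[OF \<psi> \<sigma> w] evW_ds[OF \<sigma> w] gen_in[OF \<psi> \<sigma> w] by simp
  qed
  then show ?thesis by simp
qed

lemma id_evW:
  assumes x: "x \<in> carrier (P n)"
  shows "x \<ominus>\<^bsub>P n\<^esub> ds n (fiid G n) (evW x) \<in> N n"
  using push_evW[OF fiid_mor x] push_id[OF x] by simp

lemma evW_zero_N:
  assumes x: "x \<in> carrier (P n)" and e: "evW x = \<zero>\<^bsub>W\<^esub>"
  shows "x \<in> N n"
proof -
  interpret Pn: module R "P n" by (rule P_module)
  have "ds n (fiid G n) \<zero>\<^bsub>W\<^esub> = \<zero>\<^bsub>P n\<^esub>"
    using linmap_zero[OF Wm P_module ds_linmap[OF fiid_mor]] .
  then show ?thesis using id_evW[OF x] e x by (simp add: Pn.minus_eq quot.neg0[OF quot_p])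
qed

end


context mctx
begin

abbreviation Q where "Q p \<equiv> quotmod (P p) (N p)"
abbreviation c where "c p \<equiv> qcls (P p) (N p)"
abbreviation MWm where "MWm \<equiv> MW R G n W \<rho>"

lemma Obj_MW: "Obj MWm p = Q p" by (simp add: MW_def)
lemma Act_MW: "Act MWm p q \<psi> A = c q (push p q \<psi> (qrep A))" by (simp add: MW_def)

lemma Q_module: "module R (Q p)" by (rule quot.Q_module[OF quot_p])

lemma c_closed: "x \<in> carrier (P p) \<Longrightarrow> c p x \<in> carrier (Q p)" by (rule quot.c_closed[OF quot_p])
lemma qrep_closed: "A \<in> carrier (Q p) \<Longrightarrow> qrep A \<in> carrier (P p)" by (rule quot.qrep_closed[OF quot_p])
lemma c_qrep: "A \<in> carrier (Q p) \<Longrightarrow> c p (qrep A) = A" by (rule quot.c_qrep[OF quot_p])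
lemma qrep_c: "x \<in> carrier (P p) \<Longrightarrow> qrep (c p x) \<ominus>\<^bsub>P p\<^esub> x \<in> N p" using quot.qrep_c[OF quot_p] by blast
lemma c_eq_iff: "x \<in> carrier (P p) \<Longrightarrow> y \<in> carrier (P p) \<Longrightarrow> (c p x = c p y) \<longleftrightarrow> x \<ominus>\<^bsub>P p\<^esub> y \<in> N p"
  by (rule quot.c_eq_iff[OF quot_p])
lemma c_zero_iff: "x \<in> carrier (P p) \<Longrightarrow> (c p x = \<zero>\<^bsub>Q p\<^esub>) \<longleftrightarrow> x \<in> N p"
  by (rule quot.c_zero_iff[OF quot_p])
lemma c_linmap: "linmap R (P p) (Q p) (c p)" by (rule quot.c_linmap[OF quot_p])
lemma Q_carrier: "carrier (Q p) = c p ` carrier (P p)" by (rule quot.Q_carrier[OF quot_p])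
lemma Q_zero: "\<zero>\<^bsub>Q p\<^esub> = c p \<zero>\<^bsub>P p\<^esub>" by (rule quot.Q_zero[OF quot_p])

lemma evg_mod:
  assumes X: "module R X" and act: "\<And>\<phi>. \<phi> \<in> fimor G n p \<Longrightarrow> linmap R W X (act \<phi>)"
    and compat: "\<And>\<phi> \<sigma> w. \<phi> \<in> fimor G n p \<Longrightarrow> \<sigma> \<in> fimor G n n \<Longrightarrow> w \<in> carrier W \<Longrightarrow>
        act (ficomp G n \<phi> \<sigma>) w = act \<phi> (\<rho> \<sigma> w)"
    and x: "x \<in> carrier (P p)" and y: "y \<in> carrier (P p)" and d: "x \<ominus>\<^bsub>P p\<^esub> y \<in> N p"
  shows "evg X act p x = evg X act p y"
proof -
  interpret X: module R X by fact
  have lm: "linmap R (P p) X (evg X act p)" by (rule evg_linmap[OF X act])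
  have "evg X act p x \<ominus>\<^bsub>X\<^esub> evg X act p y = \<zero>\<^bsub>X\<^esub>"
    using linmap_minus[OF P_module X lm x y] evg_N[OF X act compat d] by simp
  then show ?thesis using X.minus_eq0 linmapD(1)[OF lm] x y by blast
qed

lemma evg_qrep_c:
  assumes X: "module R X" and act: "\<And>\<phi>. \<phi> \<in> fimor G n p \<Longrightarrow> linmap R W X (act \<phi>)"
    and compat: "\<And>\<phi> \<sigma> w. \<phi> \<in> fimor G n p \<Longrightarrow> \<sigma> \<in> fimor G n n \<Longrightarrow> w \<in> carrier W \<Longrightarrow>
        act (ficomp G n \<phi> \<sigma>) w = act \<phi> (\<rho> \<sigma> w)"
    and x: "x \<in> carrier (P p)"
  shows "evg X act p (qrep (c p x)) = evg X act p x"
  by (rule evg_mod[OF X act compat qrep_closed[OF c_closed[OF x]] x qrep_c[OF x]])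

lemma Act_c:
  assumes \<psi>: "\<psi> \<in> fimor G p q" and x: "x \<in> carrier (P p)"
  shows "Act MWm p q \<psi> (c p x) = c q (push p q \<psi> x)"
proof -
  have r: "qrep (c p x) \<in> carrier (P p)" using qrep_closed[OF c_closed[OF x]] .
  have "push p q \<psi> (qrep (c p x)) \<ominus>\<^bsub>P q\<^esub> push p q \<psi> x = push p q \<psi> (qrep (c p x) \<ominus>\<^bsub>P p\<^esub> x)"
    using linmap_minus[OF P_module P_module push_linmap[OF \<psi>] r x] by simp
  also have "\<dots> \<in> N q" by (rule push_N[OF \<psi> qrep_c[OF x]])
  finally show ?thesis unfolding Act_MW
    using c_eq_iff push_carrier[OF \<psi> r] push_carrier[OF \<psi> x] by blast
qed

lemma Act_linmap:
  assumes \<psi>: "\<psi> \<in> fimor G p q"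
  shows "linmap R (Q p) (Q q) (Act MWm p q \<psi>)"
proof (rule linmapI)
  interpret Pp: module R "P p" by (rule P_module)
  interpret Qp: quot R "P p" "N p" by (rule quot_p)
  interpret Qq: quot R "P q" "N q" by (rule quot_p)
  fix A assume "A \<in> carrier (Q p)"
  then obtain x where x: "x \<in> carrier (P p)" "A = c p x" by (auto simp: Q_carrier)
  then show "Act MWm p q \<psi> A \<in> carrier (Q q)" using Act_c[OF \<psi> x(1)] push_carrier[OF \<psi> x(1)] c_closed by simp
next
  interpret Pp: module R "P p" by (rule P_module)
  interpret Qp: quot R "P p" "N p" by (rule quot_p)
  interpret Qq: quot R "P q" "N q" by (rule quot_p)
  fix A B assume "A \<in> carrier (Q p)" "B \<in> carrier (Q p)"
  then obtain x y where x: "x \<in> carrier (P p)" "A = c p x" and y: "y \<in> carrier (P p)" "B = c p y"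
    by (auto simp: Q_carrier)
  show "Act MWm p q \<psi> (A \<oplus>\<^bsub>Q p\<^esub> B) = Act MWm p q \<psi> A \<oplus>\<^bsub>Q q\<^esub> Act MWm p q \<psi> B"
    unfolding x y Qp.c_add[OF x(1) y(1)] Act_c[OF \<psi> Pp.add.m_closed[OF x(1) y(1)]] Act_c[OF \<psi> x(1)] Act_c[OF \<psi> y(1)]
      Qq.c_add[OF push_carrier[OF \<psi> x(1)] push_carrier[OF \<psi> y(1)]]
    using linmapD(2)[OF push_linmap[OF \<psi>] x(1) y(1)] by simp
next
  interpret Pp: module R "P p" by (rule P_module)
  interpret Qp: quot R "P p" "N p" by (rule quot_p)
  interpret Qq: quot R "P q" "N q" by (rule quot_p)
  fix a A assume a: "a \<in> carrier R" and "A \<in> carrier (Q p)"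
  then obtain x where x: "x \<in> carrier (P p)" "A = c p x" by (auto simp: Q_carrier)
  show "Act MWm p q \<psi> (a \<odot>\<^bsub>Q p\<^esub> A) = a \<odot>\<^bsub>Q q\<^esub> Act MWm p q \<psi> A"
    unfolding x Qp.c_smult[OF a x(1)] Act_c[OF \<psi> Pp.smult_closed[OF a x(1)]] Act_c[OF \<psi> x(1)]
      Qq.c_smult[OF a push_carrier[OF \<psi> x(1)]]
    using linmapD(3)[OF push_linmap[OF \<psi>] a x(1)] by simp
qed

lemma Act_n:
  assumes \<psi>: "\<psi> \<in> fimor G n p" and A: "A \<in> carrier (Q n)"
  shows "Act MWm n p \<psi> A = c p (ds p \<psi> (evW (qrep A)))"
proof -
  have r: "qrep A \<in> carrier (P n)" using qrep_closed[OF A] .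
  show ?thesis unfolding Act_MW
    using c_eq_iff push_evW[OF \<psi> r] push_carrier[OF \<psi> r] ds_carrier[OF \<psi> evW_closed[OF r]] by blast
qed

lemma evW_qrep_ds:
  assumes w: "w \<in> carrier W"
  shows "evW (qrep (c n (ds n (fiid G n) w))) = w"
  using evg_qrep_c[OF Wm rho_linmap rho_comp ds_carrier[OF fiid_mor w]] evW_ds[OF fiid_mor w] rho_id[OF w]
  by simp

lemma c_ds_Act:
  assumes \<phi>: "\<phi> \<in> fimor G n p" and w: "w \<in> carrier W"
  shows "c p (ds p \<phi> w) = Act MWm n p \<phi> (c n (ds n (fiid G n) w))"
  using Act_c[OF \<phi> ds_carrier[OF fiid_mor w]] push_ds[OF \<phi> fiid_mor w] fiid_right[OF \<phi>] by simp

lemma Qn_rep: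
  assumes A: "A \<in> carrier (Q n)"
  shows "c n (ds n (fiid G n) (evW (qrep A))) = A"
proof -
  have r: "qrep A \<in> carrier (P n)" using qrep_closed[OF A] .
  have "c n (qrep A) = c n (ds n (fiid G n) (evW (qrep A)))"
    using c_eq_iff id_evW[OF r] r ds_carrier[OF fiid_mor evW_closed[OF r]] by blast
  then show ?thesis using c_qrep[OF A] by simp
qed

lemma evW_qrep_zero:
  assumes A: "A \<in> carrier (Q n)" and e: "evW (qrep A) = \<zero>\<^bsub>W\<^esub>"
  shows "A = \<zero>\<^bsub>Q n\<^esub>"
  using c_zero_iff[OF qrep_closed[OF A]] evW_zero_N[OF qrep_closed[OF A] e] c_qrep[OF A] by simp

lemma evW_qrep_linmap: "linmap R (Q n) W (\<lambda>A. evW (qrep A))"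
proof (rule linmapI)
  interpret Pn: module R "P n" by (rule P_module)
  interpret Qn: quot R "P n" "N n" by (rule quot_p)
  show "evW (qrep A) \<in> carrier W" if "A \<in> carrier (Q n)" for A using evW_closed[OF qrep_closed[OF that]] .
  fix A B assume "A \<in> carrier (Q n)" "B \<in> carrier (Q n)"
  then obtain x y where x: "x \<in> carrier (P n)" "A = c n x" and y: "y \<in> carrier (P n)" "B = c n y"
    by (auto simp: Q_carrier)
  show "evW (qrep (A \<oplus>\<^bsub>Q n\<^esub> B)) = evW (qrep A) \<oplus>\<^bsub>W\<^esub> evW (qrep B)"
    unfolding x y Qn.c_add[OF x(1) y(1)]
    using evg_qrep_c[OF Wm rho_linmap rho_comp] x(1) y(1) linmapD(2)[OF evW_linmap x(1) y(1)] by simp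
next
  interpret Pn: module R "P n" by (rule P_module)
  interpret Qn: quot R "P n" "N n" by (rule quot_p)
  fix a A assume a: "a \<in> carrier R" and "A \<in> carrier (Q n)"
  then obtain x where x: "x \<in> carrier (P n)" "A = c n x" by (auto simp: Q_carrier)
  show "evW (qrep (a \<odot>\<^bsub>Q n\<^esub> A)) = a \<odot>\<^bsub>W\<^esub> evW (qrep A)"
    unfolding x Qn.c_smult[OF a x(1)]
    using evg_qrep_c[OF Wm rho_linmap rho_comp] x(1) a linmapD(3)[OF evW_linmap a x(1)] by simp
qed

end


locale figctx = fgrp G for G :: "'g monoid" (structure) +
  fixes R :: "'k ring" and m :: nat and X :: "('k, 'g, 'x) figmod"
  assumes R: "cring R" and X: "fig_module R G X"
begin

lemma Xmod: "module R (Obj X p)" using X by (simp add: fig_module_def)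
lemma Xlin: "\<phi> \<in> fimor G p q \<Longrightarrow> linmap R (Obj X p) (Obj X q) (Act X p q \<phi>)"
  using X by (simp add: fig_module_def)
lemma Xid: "x \<in> carrier (Obj X p) \<Longrightarrow> Act X p p (fiid G p) x = x"
  using X by (simp add: fig_module_def)
lemma Xcomp: "\<psi> \<in> fimor G n k \<Longrightarrow> \<phi> \<in> fimor G k p \<Longrightarrow> x \<in> carrier (Obj X n) \<Longrightarrow>
    Act X n p (ficomp G n \<phi> \<psi>) x = Act X k p \<phi> (Act X n k \<psi> x)"
  using X unfolding fig_module_def by blast
lemma Xclosed: "\<phi> \<in> fimor G p q \<Longrightarrow> x \<in> carrier (Obj X p) \<Longrightarrow> Act X p q \<phi> x \<in> carrier (Obj X q)"
  using linmapD(1)[OF Xlin] .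

lemma gmX: "grp_mod R G m (Obj X m) (Act X m m)"
  unfolding grp_mod_def using Xmod Xlin Xid Xcomp by blast

sublocale M: mctx G R "Obj X m" m "Act X m m"
  by (rule mctx.intro[OF pctx.intro[OF fgrp_axioms pctx_axioms.intro[OF R Xmod]]])
     (rule mctx_axioms.intro[OF gmX])

definition eps where "eps p = M.evg (Obj X p) (Act X m p) p"

lemma eps_compat: "\<phi> \<in> fimor G m p \<Longrightarrow> \<sigma> \<in> fimor G m m \<Longrightarrow> w \<in> carrier (Obj X m) \<Longrightarrow>
    Act X m p (ficomp G m \<phi> \<sigma>) w = Act X m p \<phi> (Act X m m \<sigma> w)"
  by (rule Xcomp)

lemma eps_linmap: "linmap R (M.P p) (Obj X p) (eps p)"
  unfolding eps_def by (rule M.evg_linmap[OF Xmod Xlin])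

lemma eps_closed: "H \<in> carrier (M.P p) \<Longrightarrow> eps p H \<in> carrier (Obj X p)"
  using linmapD(1)[OF eps_linmap] .

lemma eps_ds: "\<phi> \<in> fimor G m p \<Longrightarrow> w \<in> carrier (Obj X m) \<Longrightarrow> eps p (M.ds p \<phi> w) = Act X m p \<phi> w"
  unfolding eps_def by (rule M.evg_ds[OF Xmod Xlin])

lemma eps_N: "H \<in> M.N p \<Longrightarrow> eps p H = \<zero>\<^bsub>Obj X p\<^esub>"
  unfolding eps_def by (rule M.evg_N[OF Xmod Xlin eps_compat])

lemma eps_qrep_c: "H \<in> carrier (M.P p) \<Longrightarrow> eps p (qrep (M.c p H)) = eps p H"
  unfolding eps_def by (rule M.evg_qrep_c[OF Xmod Xlin eps_compat])

lemma eps_mod: "x \<in> carrier (M.P p) \<Longrightarrow> y \<in> carrier (M.P p) \<Longrightarrow> x \<ominus>\<^bsub>M.P p\<^esub> y \<in> M.N p \<Longrightarrow> eps p x = eps p y"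
  unfolding eps_def by (rule M.evg_mod[OF Xmod Xlin eps_compat])

lemma eps_nat:
  assumes \<psi>: "\<psi> \<in> fimor G p q" and H: "H \<in> carrier (M.P p)"
  shows "eps q (M.push p q \<psi> H) = Act X p q \<psi> (eps p H)"
proof -
  have "(eps q \<circ> M.push p q \<psi>) H = (Act X p q \<psi> \<circ> eps p) H"
  proof (rule M.P_lin_eq[OF Xmod _ _ _ H])
    show "linmap R (M.P p) (Obj X q) (eps q \<circ> M.push p q \<psi>)"
      by (rule linmap_comp[OF M.push_linmap[OF \<psi>] eps_linmap])
    show "linmap R (M.P p) (Obj X q) (Act X p q \<psi> \<circ> eps p)"
      by (rule linmap_comp[OF eps_linmap Xlin[OF \<psi>]])
    fix \<phi> w assume \<phi>: "\<phi> \<in> fimor G m p" and w: "w \<in> carrier (Obj X m)"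
    show "(eps q \<circ> M.push p q \<psi>) (M.ds p \<phi> w) = (Act X p q \<psi> \<circ> eps p) (M.ds p \<phi> w)"
      using M.push_ds[OF \<psi> \<phi> w] eps_ds[OF ficomp_mor[OF \<phi> \<psi>] w] eps_ds[OF \<phi> w] Xcomp[OF \<phi> \<psi> w] by simp
  qed
  then show ?thesis by simp
qed

definition Z where "Z = (Obj X m)\<lparr>carrier := {\<zero>\<^bsub>Obj X m\<^esub>}\<rparr>"

lemma Z_module: "module R Z"
proof -
  interpret Xm: module R "Obj X m" by (rule Xmod)
  show ?thesis unfolding Z_def
    by (rule submodule.submodule_is_module[OF zero_submodule[OF Xmod] Xmod])
qed

lemma Z_gm: "grp_mod R G k Z (\<lambda>_ x. x)"
  unfolding grp_mod_def using Z_module by (auto intro: linmapI)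

lemma Z_mctx: "mctx G R Z k (\<lambda>_ x. x)"
  by (rule mctx.intro[OF pctx.intro[OF fgrp_axioms pctx_axioms.intro[OF R Z_module]]])
     (rule mctx_axioms.intro[OF Z_gm])

lemma Z_sing:
  assumes A: "A \<in> carrier (Obj (MW R G k Z (\<lambda>_ x. x)) p)" and B: "B \<in> carrier (Obj (MW R G k Z (\<lambda>_ x. x)) p)"
  shows "A = B"
proof -
  interpret Zc: mctx G R Z k "\<lambda>_ x. x" by (rule Z_mctx)
  have P1: "F = \<zero>\<^bsub>Zc.P p\<^esub>" if "F \<in> carrier (Zc.P p)" for F
  proof (rule Zc.P_eqI[OF that])
    show "\<zero>\<^bsub>Zc.P p\<^esub> \<in> carrier (Zc.P p)" using module.axioms(2)[OF Zc.P_module] abelian_groupE(2) by blast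
    fix \<phi> assume \<phi>: "\<phi> \<in> fimor G k p"
    have "F \<phi> \<in> carrier Z" using Zc.P_val[OF that \<phi>] .
    moreover have "carrier Z = {\<zero>\<^bsub>Z\<^esub>}" by (simp add: Z_def)
    ultimately show "F \<phi> = \<zero>\<^bsub>Zc.P p\<^esub> \<phi>" using \<phi> by (simp add: Zc.P_zero)
  qed
  show ?thesis using A B unfolding Zc.Obj_MW Zc.Q_carrier using P1 by auto
qed

lemma iso:
  assumes surj: "\<And>p u. u \<in> carrier (Obj X p) \<Longrightarrow> \<exists>H\<in>carrier (M.P p). eps p H = u"
    and inj: "\<And>p H. H \<in> carrier (M.P p) \<Longrightarrow> eps p H = \<zero>\<^bsub>Obj X p\<^esub> \<Longrightarrow> H \<in> M.N p"
  shows "rel_proj R G TYPE('x) X"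
proof -
  define Wf where "Wf k = (if k = m then Obj X m else Z)" for k
  define \<rho>f where "\<rho>f k = (if k = m then Act X m m else (\<lambda>_ x. x))" for k
  let ?M = "\<lambda>k. MW R G k (Wf k) (\<rho>f k)"
  let ?D = "dsumfig R (UNIV :: nat set) ?M"
  have gm: "grp_mod R G k (Wf k) (\<rho>f k)" for k
    using gmX Z_gm by (simp add: Wf_def \<rho>f_def)
  have Mm: "?M m = M.MWm" by (simp add: Wf_def \<rho>f_def)
  have Mk: "k \<noteq> m \<Longrightarrow> ?M k = MW R G k Z (\<lambda>_ x. x)" for k by (simp add: Wf_def \<rho>f_def)
  have ObjD: "Obj ?D p = dsum R UNIV (\<lambda>k. Obj (?M k) p)" for p by (simp add: dsumfig_def)
  have ActD: "Act ?D p q \<psi> F = (\<lambda>k. Act (?M k) p q \<psi> (F k))" for p q \<psi> F by (simp add: dsumfig_def)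
  have Dcar: "F \<in> carrier (Obj ?D p) \<Longrightarrow> F m \<in> carrier (M.Q p)" for F p
  proof -
    assume "F \<in> carrier (Obj ?D p)"
    then have "F m \<in> carrier (Obj (?M m) p)" by (simp add: ObjD dsum_carrier)
    then show ?thesis unfolding Mm M.Obj_MW .
  qed
  have Dcar': "F \<in> carrier (Obj ?D p) \<Longrightarrow> F k \<in> carrier (Obj (?M k) p)" for F p k
    by (simp add: ObjD dsum_carrier)
  define \<eta> where "\<eta> p F = eps p (qrep (F m))" for p F
  have mor: "fig_morph R G ?D X \<eta>"
    unfolding fig_morph_def
  proof (intro conjI allI ballI)
    fix p
    show "linmap R (Obj ?D p) (Obj X p) (\<eta> p)"
    proof (rule linmapI)
      fix F assume "F \<in> carrier (Obj ?D p)"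
      then show "\<eta> p F \<in> carrier (Obj X p)" unfolding \<eta>_def
        using Dcar M.qrep_closed eps_closed by blast
    next
      interpret Qp: quot R "M.P p" "M.N p" by (rule M.quot_p)
      fix F H assume F: "F \<in> carrier (Obj ?D p)" and H: "H \<in> carrier (Obj ?D p)"
      have rF: "qrep (F m) \<in> carrier (M.P p)" and rH: "qrep (H m) \<in> carrier (M.P p)"
        using M.qrep_closed Dcar F H by blast+
      have "(F \<oplus>\<^bsub>Obj ?D p\<^esub> H) m = F m \<oplus>\<^bsub>M.Q p\<^esub> H m" using Mm by (simp add: ObjD dsum_add M.Obj_MW)
      also have "\<dots> = M.c p (qrep (F m) \<oplus>\<^bsub>M.P p\<^esub> qrep (H m))"
        using Qp.c_add[OF rF rH] M.c_qrep[OF Dcar[OF F]] M.c_qrep[OF Dcar[OF H]] by simp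
      finally show "\<eta> p (F \<oplus>\<^bsub>Obj ?D p\<^esub> H) = \<eta> p F \<oplus>\<^bsub>Obj X p\<^esub> \<eta> p H"
        unfolding \<eta>_def using eps_qrep_c[OF abelian_groupE(1)[OF module.axioms(2)[OF M.P_module] rF rH]]
          linmapD(2)[OF eps_linmap rF rH] by simp
    next
      interpret Qp: quot R "M.P p" "M.N p" by (rule M.quot_p)
      fix a F assume a: "a \<in> carrier R" and F: "F \<in> carrier (Obj ?D p)"
      have rF: "qrep (F m) \<in> carrier (M.P p)" using M.qrep_closed Dcar F by blast
      have "(a \<odot>\<^bsub>Obj ?D p\<^esub> F) m = a \<odot>\<^bsub>M.Q p\<^esub> F m" using Mm by (simp add: ObjD dsum_smult M.Obj_MW)
      also have "\<dots> = M.c p (a \<odot>\<^bsub>M.P p\<^esub> qrep (F m))"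
        using Qp.c_smult[OF a rF] M.c_qrep[OF Dcar[OF F]] by simp
      finally show "\<eta> p (a \<odot>\<^bsub>Obj ?D p\<^esub> F) = a \<odot>\<^bsub>Obj X p\<^esub> \<eta> p F"
        unfolding \<eta>_def using eps_qrep_c[OF module.smult_closed[OF M.P_module a rF]]
          linmapD(3)[OF eps_linmap a rF] by simp
    qed
  next
    fix p q \<psi> F assume \<psi>: "\<psi> \<in> fimor G p q" and F: "F \<in> carrier (Obj ?D p)"
    have rF: "qrep (F m) \<in> carrier (M.P p)" using M.qrep_closed Dcar F by blast
    have "Act ?D p q \<psi> F m = M.c q (M.push p q \<psi> (qrep (F m)))"
      using Mm by (simp add: ActD M.Act_MW)
    then show "\<eta> q (Act ?D p q \<psi> F) = Act X p q \<psi> (\<eta> p F)"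
      unfolding \<eta>_def using eps_qrep_c[OF M.push_carrier[OF \<psi> rF]] eps_nat[OF \<psi> rF] by simp
  qed
  have bij: "bij_betw (\<eta> p) (carrier (Obj ?D p)) (carrier (Obj X p))" for p
  proof (rule bij_betw_imageI)
    show "inj_on (\<eta> p) (carrier (Obj ?D p))"
    proof (rule inj_onI)
      fix F H assume F: "F \<in> carrier (Obj ?D p)" and H: "H \<in> carrier (Obj ?D p)" and e: "\<eta> p F = \<eta> p H"
      have rF: "qrep (F m) \<in> carrier (M.P p)" and rH: "qrep (H m) \<in> carrier (M.P p)"
        using M.qrep_closed Dcar F H by blast+
      interpret Xp: module R "Obj X p" by (rule Xmod)
      have "eps p (qrep (F m) \<ominus>\<^bsub>M.P p\<^esub> qrep (H m)) = \<zero>\<^bsub>Obj X p\<^esub>"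
        using linmap_minus[OF M.P_module Xmod eps_linmap rF rH] e eps_closed[OF rH]
        by (simp add: \<eta>_def Xp.r_neg Xp.minus_eq)
      then have "qrep (F m) \<ominus>\<^bsub>M.P p\<^esub> qrep (H m) \<in> M.N p"
        using inj abelian_group.minus_closed[OF module.axioms(2)[OF M.P_module] rF rH] by blast
      then have "M.c p (qrep (F m)) = M.c p (qrep (H m))" using M.c_eq_iff[OF rF rH] by simp
      then have Fm: "F m = H m" using M.c_qrep[OF Dcar[OF F]] M.c_qrep[OF Dcar[OF H]] by simp
      show "F = H"
      proof
        fix k show "F k = H k"
        proof (cases "k = m")
          case True then show ?thesis using Fm by simp
        next
          case False then show ?thesis using Z_sing Dcar'[OF F, of k] Dcar'[OF H, of k] Mk[OF False] by simp
        qed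
      qed
    qed
    show "\<eta> p ` carrier (Obj ?D p) = carrier (Obj X p)"
    proof
      have lm: "linmap R (Obj ?D p) (Obj X p) (\<eta> p)" using mor by (simp add: fig_morph_def)
      show "\<eta> p ` carrier (Obj ?D p) \<subseteq> carrier (Obj X p)"
        using linmapD(1)[OF lm] by (rule image_subsetI)
    next
      show "carrier (Obj X p) \<subseteq> \<eta> p ` carrier (Obj ?D p)"
      proof
        fix u assume "u \<in> carrier (Obj X p)"
        then obtain H where H: "H \<in> carrier (M.P p)" and eH: "eps p H = u" using surj by blast
        define F where "F k = (if k = m then M.c p H else \<zero>\<^bsub>Obj (?M k) p\<^esub>)" for k
        have Fc: "F \<in> carrier (Obj ?D p)"
        proof -
          have "F k \<in> carrier (Obj (?M k) p)" for k
          proof (cases "k = m")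
            case True then show ?thesis using M.c_closed[OF H] Mm by (simp add: F_def M.Obj_MW)
          next
            case False
            interpret Zc: mctx G R Z k "\<lambda>_ x. x" by (rule Z_mctx)
            show ?thesis using False Mk[OF False] abelian_groupE(2)[OF module.axioms(2)[OF Zc.Q_module]]
              by (simp add: F_def Zc.Obj_MW)
          qed
          moreover have "supp UNIV (\<lambda>k. Obj (?M k) p) F \<subseteq> {m}" by (auto simp: supp_def F_def)
          ultimately show ?thesis by (auto simp: ObjD dsum_carrier intro: finite_subset)
        qed
        have "\<eta> p F = u" unfolding \<eta>_def F_def using eps_qrep_c[OF H] eH by simp
        then show "u \<in> \<eta> p ` carrier (Obj ?D p)" using Fc by blast
      qed
    qed
  qed
  have "(\<forall>k. grp_mod R G k (Wf k) (\<rho>f k)) \<and> fig_iso R G ?D X"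
    unfolding fig_iso_def using gm mor bij by (intro conjI allI exI[of _ \<eta>])
  then show ?thesis unfolding rel_proj_def by (intro exI)
qed

end


lemma rr_indep_test: "mctx.rr G n \<phi> = mctx.rr G n \<phi>" by simp

definition cmap :: "'g monoid \<Rightarrow> nat \<Rightarrow> nat \<Rightarrow> ('a \<Rightarrow> 'b) \<Rightarrow> ('g fimor \<Rightarrow> 'a) \<Rightarrow> 'g fimor \<Rightarrow> 'b" where
  "cmap G n p f F = (\<lambda>\<phi>. if \<phi> \<in> fimor G n p then f (F \<phi>) else undefined)"

locale twoctx = A: pctx G R W1 n + B: pctx G R W2 n
  for G :: "'g monoid" (structure) and R :: "'k ring" and W1 :: "('k, 'a) module"
    and W2 :: "('k, 'b) module" and n :: nat +
  fixes f assumes f: "linmap R W1 W2 f"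
begin

lemma f0: "f \<zero>\<^bsub>W1\<^esub> = \<zero>\<^bsub>W2\<^esub>" using linmap_zero[OF A.Wm B.Wm f] .

lemma cmap_apply: "\<phi> \<in> fimor G n p \<Longrightarrow> cmap G n p f F \<phi> = f (F \<phi>)"
  by (simp add: cmap_def)

lemma cmap_sp: "B.sp p (cmap G n p f F) \<subseteq> A.sp p F"
  using f0 by (auto simp: supp_def cmap_def)

lemma cmap_carrier: "F \<in> carrier (A.P p) \<Longrightarrow> cmap G n p f F \<in> carrier (B.P p)"
  using linmapD(1)[OF f] A.P_val finite_subset[OF cmap_sp A.sp_fin]
  by (auto simp: B.P_carrier cmap_def)

lemma cmap_linmap: "linmap R (A.P p) (B.P p) (cmap G n p f)"
proof (rule linmapI)
  show "cmap G n p f F \<in> carrier (B.P p)" if "F \<in> carrier (A.P p)" for F using cmap_carrier[OF that] .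
  fix F H assume F: "F \<in> carrier (A.P p)" and H: "H \<in> carrier (A.P p)"
  show "cmap G n p f (F \<oplus>\<^bsub>A.P p\<^esub> H) = cmap G n p f F \<oplus>\<^bsub>B.P p\<^esub> cmap G n p f H"
    using linmapD(2)[OF f] A.P_val[OF F] A.P_val[OF H] by (auto simp: cmap_def A.P_add B.P_add fun_eq_iff)
next
  fix a F assume a: "a \<in> carrier R" and F: "F \<in> carrier (A.P p)"
  show "cmap G n p f (a \<odot>\<^bsub>A.P p\<^esub> F) = a \<odot>\<^bsub>B.P p\<^esub> cmap G n p f F"
    using linmapD(3)[OF f] A.P_val[OF F] a by (auto simp: cmap_def A.P_smult B.P_smult fun_eq_iff)
qed

lemma cmap_ds: "\<phi> \<in> fimor G n p \<Longrightarrow> w \<in> carrier W1 \<Longrightarrow> cmap G n p f (A.ds p \<phi> w) = B.ds p \<phi> (f w)"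
  using f0 by (auto simp: cmap_def dsingle_def fun_eq_iff)

end

lemma selfmod_module: assumes R: "cring R" shows "module R (selfmod R)"
proof -
  interpret R: cring R by fact
  have ag: "abelian_group (selfmod R)"
    by (rule abelian_groupI) (auto simp: selfmod_def R.a_ac intro: R.l_neg)
  show ?thesis
    by (rule moduleI[OF R ag]) (auto simp: selfmod_def R.l_distr R.r_distr R.m_assoc)
qed

lemma (in fgrp) kG_gm: assumes R: "cring R" shows "grp_mod R G k (kG R G k) (kG_act R G k)"
proof -
  interpret S: pctx G R "selfmod R" k by (rule pctx.intro[OF fgrp_axioms pctx_axioms.intro[OF R selfmod_module[OF R]]])
  have e: "kG R G k = S.P k" by (simp add: kG_def Mpre_def)
  show ?thesis unfolding grp_mod_def e kG_act_def
    using S.P_module S.push_linmap S.push_id S.push_comp by auto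
qed


lemma linmap_image_sub:
  assumes M: "module R M" and N: "module R N" and f: "linmap R M N f"
  shows "submodule (f ` carrier M) R N"
proof -
  interpret M: module R M by fact
  interpret N: module R N by fact
  show ?thesis
  proof (rule N.submoduleI)
    show "f ` carrier M \<subseteq> carrier N" using linmapD(1)[OF f] by auto
    show "\<zero>\<^bsub>N\<^esub> \<in> f ` carrier M" using linmap_zero[OF M N f] M.zero_closed by (metis image_eqI)
    fix a assume "a \<in> f ` carrier M"
    then obtain x where x: "x \<in> carrier M" "a = f x" by blast
    show "\<ominus>\<^bsub>N\<^esub> a \<in> f ` carrier M" using linmap_neg[OF M N f x(1)] x M.a_inv_closed[OF x(1)] by (metis image_eqI)
  next
    fix a b assume "a \<in> f ` carrier M" "b \<in> f ` carrier M"
    then obtain x y where x: "x \<in> carrier M" "a = f x" and y: "y \<in> carrier M" "b = f y" by blast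
    show "a \<oplus>\<^bsub>N\<^esub> b \<in> f ` carrier M" using linmapD(2)[OF f x(1) y(1)] x y M.add.m_closed[OF x(1) y(1)]
      by (metis image_eqI)
  next
    fix a x assume a: "a \<in> carrier R" and "x \<in> f ` carrier M"
    then obtain y where y: "y \<in> carrier M" "x = f y" by blast
    show "a \<odot>\<^bsub>N\<^esub> x \<in> f ` carrier M" using linmapD(3)[OF f a y(1)] y M.smult_closed[OF a y(1)]
      by (metis image_eqI)
  qed
qed

lemma fimor_empty: "k < m \<Longrightarrow> fimor G m k = {}"
proof (rule ccontr)
  assume k: "k < m" and "fimor G m k \<noteq> {}"
  then obtain \<phi> where \<phi>: "\<phi> \<in> fimor G m k" by blast
  have sub: "fst \<phi> ` {..<m} \<subseteq> {..<k}" using fimorD(1)[OF \<phi>] by (auto simp: PiE_def Pi_def)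
  have "card {..<m} \<le> card {..<k}"
    using card_inj_on_le[OF fimorD(2)[OF \<phi>] sub] by simp
  then show False using k by simp
qed

locale mainctx = fgrp G for G :: "'g monoid" (structure) +
  fixes R :: "'k ring" and m :: nat and W :: "('k, 'w) module" and \<rho> :: "'g fimor \<Rightarrow> 'w \<Rightarrow> 'w"
    and U :: "('k, 'g, 'u) figmod" and V :: "('k, 'g, 'v) figmod"
    and \<iota> :: "nat \<Rightarrow> 'u \<Rightarrow> ('g fimor \<Rightarrow> 'w) set"
    and \<pi> :: "nat \<Rightarrow> ('g fimor \<Rightarrow> 'w) set \<Rightarrow> 'v"
  assumes R: "cring R" and gm: "grp_mod R G m W \<rho>"
    and Uf: "fig_module R G U" and Vf: "fig_module R G V"
    and se: "short_exact R G U (MW R G m W \<rho>) V \<iota> \<pi>"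
begin

lemma Wmod: "module R W" using gm by (simp add: grp_mod_def)

sublocale Wc: mctx G R W m \<rho>
  by (rule mctx.intro[OF pctx.intro[OF fgrp_axioms pctx_axioms.intro[OF R Wmod]]])
     (rule mctx_axioms.intro[OF gm])

sublocale UX: figctx G R m U
  by (rule figctx.intro[OF fgrp_axioms figctx_axioms.intro[OF R Uf]])

sublocale VX: figctx G R m V
  by (rule figctx.intro[OF fgrp_axioms figctx_axioms.intro[OF R Vf]])

lemma \<iota>_lin: "linmap R (Obj U p) (Wc.Q p) (\<iota> p)"
  using se by (simp add: short_exact_def fig_morph_def Wc.Obj_MW)
lemma \<iota>_nat: "\<psi> \<in> fimor G p q \<Longrightarrow> x \<in> carrier (Obj U p) \<Longrightarrow> \<iota> q (Act U p q \<psi> x) = Act Wc.MWm p q \<psi> (\<iota> p x)"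
  using se by (simp add: short_exact_def fig_morph_def)
lemma \<iota>_inj: "inj_on (\<iota> p) (carrier (Obj U p))"
  using se by (simp add: short_exact_def)
lemma \<iota>_ker: "\<iota> p ` carrier (Obj U p) = {x \<in> carrier (Wc.Q p). \<pi> p x = \<zero>\<^bsub>Obj V p\<^esub>}"
  using se by (simp add: short_exact_def Wc.Obj_MW)
lemma \<pi>_lin: "linmap R (Wc.Q p) (Obj V p) (\<pi> p)"
  using se by (simp add: short_exact_def fig_morph_def Wc.Obj_MW)
lemma \<pi>_nat: "\<psi> \<in> fimor G p q \<Longrightarrow> x \<in> carrier (Wc.Q p) \<Longrightarrow> \<pi> q (Act Wc.MWm p q \<psi> x) = Act V p q \<psi> (\<pi> p x)"
  using se by (simp add: short_exact_def fig_morph_def Wc.Obj_MW)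
lemma \<pi>_surj: "\<pi> p ` carrier (Wc.Q p) = carrier (Obj V p)"
  using se by (simp add: short_exact_def Wc.Obj_MW)

definition g where "g u = Wc.evW (qrep (\<iota> m u))"
definition h where "h w = \<pi> m (Wc.c m (Wc.ds m (fiid G m) w))"

lemma g_lin: "linmap R (Obj U m) W g"
  using linmap_comp[OF \<iota>_lin Wc.evW_qrep_linmap] by (simp add: g_def[abs_def] comp_def)

lemma h_lin: "linmap R W (Obj V m) h"
  using linmap_comp[OF linmap_comp[OF Wc.ds_linmap[OF fiid_mor] Wc.c_linmap] \<pi>_lin]
  by (simp add: h_def[abs_def] comp_def)

lemma g_zero:
  assumes u: "u \<in> carrier (Obj U m)" and e: "g u = \<zero>\<^bsub>W\<^esub>"
  shows "u = \<zero>\<^bsub>Obj U m\<^esub>"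
proof -
  have iu: "\<iota> m u \<in> carrier (Wc.Q m)" using linmapD(1)[OF \<iota>_lin u] .
  have "\<iota> m u = \<zero>\<^bsub>Wc.Q m\<^esub>" using Wc.evW_qrep_zero[OF iu] e by (simp add: g_def)
  also have "\<dots> = \<iota> m \<zero>\<^bsub>Obj U m\<^esub>" using linmap_zero[OF UX.Xmod Wc.Q_module \<iota>_lin] by simp
  finally show ?thesis using \<iota>_inj[of m] u module.axioms(2)[OF UX.Xmod, THEN abelian_groupE(2)]
    by (auto simp: inj_on_def)
qed

lemma hg: "u \<in> carrier (Obj U m) \<Longrightarrow> h (g u) = \<zero>\<^bsub>Obj V m\<^esub>"
proof -
  assume u: "u \<in> carrier (Obj U m)"
  have iu: "\<iota> m u \<in> carrier (Wc.Q m)" using linmapD(1)[OF \<iota>_lin u] .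
  have "h (g u) = \<pi> m (\<iota> m u)" unfolding h_def g_def Wc.Qn_rep[OF iu] ..
  also have "\<dots> = \<zero>\<^bsub>Obj V m\<^esub>" using \<iota>_ker[of m] u by auto
  finally show ?thesis .
qed

lemma h_surj: "v \<in> carrier (Obj V m) \<Longrightarrow> \<exists>w\<in>carrier W. h w = v"
proof -
  assume "v \<in> carrier (Obj V m)"
  then obtain A where A: "A \<in> carrier (Wc.Q m)" and v: "v = \<pi> m A" using \<pi>_surj[of m] by blast
  have "h (Wc.evW (qrep A)) = v" unfolding h_def Wc.Qn_rep[OF A] v ..
  then show ?thesis using Wc.evW_closed[OF Wc.qrep_closed[OF A]] by blast
qed

sublocale TG: twoctx G R "Obj U m" W m g
  by (rule twoctx.intro[OF UX.M.pctx_axioms Wc.pctx_axioms]) (rule twoctx_axioms.intro[OF g_lin])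

sublocale TH: twoctx G R W "Obj V m" m h
  by (rule twoctx.intro[OF Wc.pctx_axioms VX.M.pctx_axioms]) (rule twoctx_axioms.intro[OF h_lin])

lemma key_U:
  assumes H: "H \<in> carrier (UX.M.P p)"
  shows "\<iota> p (UX.eps p H) = Wc.c p (cmap G m p g H)"
proof -
  have "(\<iota> p \<circ> UX.eps p) H = (Wc.c p \<circ> cmap G m p g) H"
  proof (rule UX.M.P_lin_eq[OF Wc.Q_module _ _ _ H])
    show "linmap R (UX.M.P p) (Wc.Q p) (\<iota> p \<circ> UX.eps p)" by (rule linmap_comp[OF UX.eps_linmap \<iota>_lin])
    show "linmap R (UX.M.P p) (Wc.Q p) (Wc.c p \<circ> cmap G m p g)" by (rule linmap_comp[OF TG.cmap_linmap Wc.c_linmap])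
    fix \<phi> u assume \<phi>: "\<phi> \<in> fimor G m p" and u: "u \<in> carrier (Obj U m)"
    have iu: "\<iota> m u \<in> carrier (Wc.Q m)" using linmapD(1)[OF \<iota>_lin u] .
    show "(\<iota> p \<circ> UX.eps p) (UX.M.ds p \<phi> u) = (Wc.c p \<circ> cmap G m p g) (UX.M.ds p \<phi> u)"
      using UX.eps_ds[OF \<phi> u] \<iota>_nat[OF \<phi> u] Wc.Act_n[OF \<phi> iu] TG.cmap_ds[OF \<phi> u] by (simp add: g_def)
  qed
  then show ?thesis by simp
qed

lemma key_V:
  assumes F: "F \<in> carrier (Wc.P p)"
  shows "\<pi> p (Wc.c p F) = VX.eps p (cmap G m p h F)"
proof -
  have "(\<pi> p \<circ> Wc.c p) F = (VX.eps p \<circ> cmap G m p h) F"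
  proof (rule Wc.P_lin_eq[OF VX.Xmod _ _ _ F])
    show "linmap R (Wc.P p) (Obj V p) (\<pi> p \<circ> Wc.c p)" by (rule linmap_comp[OF Wc.c_linmap \<pi>_lin])
    show "linmap R (Wc.P p) (Obj V p) (VX.eps p \<circ> cmap G m p h)" by (rule linmap_comp[OF TH.cmap_linmap VX.eps_linmap])
    fix \<phi> w assume \<phi>: "\<phi> \<in> fimor G m p" and w: "w \<in> carrier W"
    have B: "Wc.c m (Wc.ds m (fiid G m) w) \<in> carrier (Wc.Q m)" using Wc.c_closed[OF Wc.ds_carrier[OF fiid_mor w]] .
    show "(\<pi> p \<circ> Wc.c p) (Wc.ds p \<phi> w) = (VX.eps p \<circ> cmap G m p h) (Wc.ds p \<phi> w)"
      using Wc.c_ds_Act[OF \<phi> w] \<pi>_nat[OF \<phi> B] TH.cmap_ds[OF \<phi> w] VX.eps_ds[OF \<phi> linmapD(1)[OF h_lin w]]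
      by (simp add: h_def)
  qed
  then show ?thesis by simp
qed

end


context mainctx
begin

lemma U_inj:
  assumes H: "H \<in> carrier (UX.M.P p)" and e: "UX.eps p H = \<zero>\<^bsub>Obj U p\<^esub>"
  shows "H \<in> UX.M.N p"
proof -
  let ?H' = "UX.M.T p H"
  have H'c: "?H' \<in> carrier (UX.M.P p)" using UX.M.T_closed[OF H] .
  have rH': "UX.M.reps p ?H'" using UX.M.T_reps[OF H] .
  have e': "UX.eps p ?H' = \<zero>\<^bsub>Obj U p\<^esub>" using UX.eps_mod[OF H H'c UX.M.T_sub[OF H]] e by simp
  let ?K = "cmap G m p g ?H'"
  have Kc: "?K \<in> carrier (Wc.P p)" using TG.cmap_carrier[OF H'c] .
  have "Wc.c p ?K = \<zero>\<^bsub>Wc.Q p\<^esub>"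
    using key_U[OF H'c] e' linmap_zero[OF UX.Xmod Wc.Q_module \<iota>_lin] by simp
  then have KN: "?K \<in> Wc.N p" using Wc.c_zero_iff[OF Kc] by simp
  have rK: "Wc.reps p ?K"
    using rH' TG.cmap_sp unfolding Wc.reps_def UX.M.reps_def by blast
  have K0: "?K = \<zero>\<^bsub>Wc.P p\<^esub>" using Wc.T_fix[OF Kc rK] Wc.T_N[OF KN] by simp
  have "?H' = \<zero>\<^bsub>UX.M.P p\<^esub>"
  proof (rule UX.M.P_eqI[OF H'c])
    show "\<zero>\<^bsub>UX.M.P p\<^esub> \<in> carrier (UX.M.P p)" using module.axioms(2)[OF UX.M.P_module] abelian_groupE(2) by blast
    fix \<phi> assume \<phi>: "\<phi> \<in> fimor G m p"
    have "g (?H' \<phi>) = \<zero>\<^bsub>W\<^esub>" using arg_cong[OF K0, of "\<lambda>F. F \<phi>"] \<phi>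
      by (simp add: TG.cmap_apply Wc.P_zero)
    then have "?H' \<phi> = \<zero>\<^bsub>Obj U m\<^esub>" using g_zero UX.M.P_val[OF H'c \<phi>] by blast
    then show "?H' \<phi> = \<zero>\<^bsub>UX.M.P p\<^esub> \<phi>" using \<phi> by (simp add: UX.M.P_zero)
  qed
  then show ?thesis using UX.M.N_iff_T[OF H] by simp
qed

lemma V_surj:
  assumes v: "v \<in> carrier (Obj V p)"
  shows "\<exists>H\<in>carrier (VX.M.P p). VX.eps p H = v"
proof -
  obtain A where A: "A \<in> carrier (Wc.Q p)" and vA: "v = \<pi> p A" using \<pi>_surj[of p] v by blast
  obtain x where x: "x \<in> carrier (Wc.P p)" and Ax: "A = Wc.c p x" using A by (auto simp: Wc.Q_carrier)
  have "v = VX.eps p (cmap G m p h x)" using key_V[OF x] vA Ax by simp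
  then show ?thesis using TH.cmap_carrier[OF x] by blast
qed

definition lift where "lift v = (if v = \<zero>\<^bsub>Obj V m\<^esub> then \<zero>\<^bsub>W\<^esub> else (SOME w. w \<in> carrier W \<and> h w = v))"

lemma lift_prop: "v \<in> carrier (Obj V m) \<Longrightarrow> lift v \<in> carrier W \<and> h (lift v) = v"
proof (cases "v = \<zero>\<^bsub>Obj V m\<^esub>")
  case True
  then show ?thesis using linmap_zero[OF Wmod VX.Xmod h_lin] module.axioms(2)[OF Wmod, THEN abelian_groupE(2)]
    by (simp add: lift_def)
next
  case False
  assume v: "v \<in> carrier (Obj V m)"
  have "\<exists>w. w \<in> carrier W \<and> h w = v" using h_surj[OF v] by blast
  then show ?thesis using False by (simp add: lift_def) (rule someI_ex)
qed

lemma V_inj: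
  assumes Us: "\<And>p u. u \<in> carrier (Obj U p) \<Longrightarrow> \<exists>H\<in>carrier (UX.M.P p). UX.eps p H = u"
    and H: "H \<in> carrier (VX.M.P p)" and e: "VX.eps p H = \<zero>\<^bsub>Obj V p\<^esub>"
  shows "H \<in> VX.M.N p"
proof -
  let ?H' = "VX.M.T p H"
  have H'c: "?H' \<in> carrier (VX.M.P p)" using VX.M.T_closed[OF H] .
  have rH': "VX.M.reps p ?H'" using VX.M.T_reps[OF H] .
  have e': "VX.eps p ?H' = \<zero>\<^bsub>Obj V p\<^esub>" using VX.eps_mod[OF H H'c VX.M.T_sub[OF H]] e by simp
  let ?F = "cmap G m p lift ?H'"
  have spF: "Wc.sp p ?F \<subseteq> VX.M.sp p ?H'"
    by (auto simp: supp_def cmap_def lift_def)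
  have Fc: "?F \<in> carrier (Wc.P p)"
    using lift_prop VX.M.P_val[OF H'c] finite_subset[OF spF VX.M.sp_fin[OF H'c]]
    by (auto simp: Wc.P_carrier cmap_def)
  have hF: "cmap G m p h ?F = ?H'"
  proof (rule VX.M.P_eqI[OF TH.cmap_carrier[OF Fc] H'c])
    fix \<phi> assume \<phi>: "\<phi> \<in> fimor G m p"
    show "cmap G m p h ?F \<phi> = ?H' \<phi>"
      using lift_prop[OF VX.M.P_val[OF H'c \<phi>]] \<phi> by (simp add: cmap_def)
  qed
  have "\<pi> p (Wc.c p ?F) = \<zero>\<^bsub>Obj V p\<^esub>" using key_V[OF Fc] hF e' by simp
  then have "Wc.c p ?F \<in> \<iota> p ` carrier (Obj U p)" using \<iota>_ker[of p] Wc.c_closed[OF Fc] by simp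
  then obtain u where u: "u \<in> carrier (Obj U p)" and iu: "\<iota> p u = Wc.c p ?F" by blast
  obtain H2 where H2: "H2 \<in> carrier (UX.M.P p)" and eH2: "UX.eps p H2 = u" using Us[OF u] by blast
  let ?H3 = "UX.M.T p H2"
  have H3c: "?H3 \<in> carrier (UX.M.P p)" using UX.M.T_closed[OF H2] .
  have rH3: "UX.M.reps p ?H3" using UX.M.T_reps[OF H2] .
  have eH3: "UX.eps p ?H3 = u" using UX.eps_mod[OF H2 H3c UX.M.T_sub[OF H2]] eH2 by simp
  let ?G = "cmap G m p g ?H3"
  have Gc: "?G \<in> carrier (Wc.P p)" using TG.cmap_carrier[OF H3c] .
  have "Wc.c p ?F = Wc.c p ?G" using iu key_U[OF H3c] eH3 by simp
  then have d: "?F \<ominus>\<^bsub>Wc.P p\<^esub> ?G \<in> Wc.N p" using Wc.c_eq_iff[OF Fc Gc] by simp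
  have rF: "Wc.reps p ?F" using rH' spF unfolding Wc.reps_def VX.M.reps_def by blast
  have rG: "Wc.reps p ?G" using rH3 TG.cmap_sp unfolding Wc.reps_def UX.M.reps_def by blast
  have FG: "?F = ?G" by (rule Wc.reps_unique[OF Fc Gc rF rG d])
  have "?H' = \<zero>\<^bsub>VX.M.P p\<^esub>"
  proof (rule VX.M.P_eqI[OF H'c])
    show "\<zero>\<^bsub>VX.M.P p\<^esub> \<in> carrier (VX.M.P p)" using module.axioms(2)[OF VX.M.P_module] abelian_groupE(2) by blast
    fix \<phi> assume \<phi>: "\<phi> \<in> fimor G m p"
    have "?H' \<phi> = h (?F \<phi>)" using arg_cong[OF hF, of "\<lambda>F. F \<phi>"] \<phi> by (simp add: cmap_def)
    also have "\<dots> = h (g (?H3 \<phi>))" using FG \<phi> by (simp add: cmap_def)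
    also have "\<dots> = \<zero>\<^bsub>Obj V m\<^esub>" using hg[OF UX.M.P_val[OF H3c \<phi>]] .
    finally show "?H' \<phi> = \<zero>\<^bsub>VX.M.P p\<^esub> \<phi>" using \<phi> by (simp add: VX.M.P_zero)
  qed
  then show ?thesis using VX.M.N_iff_T[OF H] by simp
qed

end


context mainctx
begin

lemma kG_mctx: "mctx G R (kG R G k) k (kG_act R G k)"
proof -
  have gmk: "grp_mod R G k (kG R G k) (kG_act R G k)" by (rule kG_gm[OF R])
  have mk: "module R (kG R G k)" using gmk by (simp add: grp_mod_def)
  show ?thesis
    by (rule mctx.intro[OF pctx.intro[OF fgrp_axioms pctx_axioms.intro[OF R mk]]])
       (rule mctx_axioms.intro[OF gmk])
qed


lemma Mn_module: "module R (Obj (Mn R G k) p)"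
proof -
  interpret Kk: mctx G R "kG R G k" k "kG_act R G k" by (rule kG_mctx)
  show ?thesis unfolding Mn_def Kk.Obj_MW by (rule Kk.Q_module)
qed

lemma Mn_Act_linmap: "\<phi> \<in> fimor G q p \<Longrightarrow> linmap R (Obj (Mn R G k) q) (Obj (Mn R G k) p) (Act (Mn R G k) q p \<phi>)"
proof -
  assume \<phi>: "\<phi> \<in> fimor G q p"
  interpret Kk: mctx G R "kG R G k" k "kG_act R G k" by (rule kG_mctx)
  show ?thesis unfolding Mn_def Kk.Obj_MW by (rule Kk.Act_linmap[OF \<phi>])
qed

lemma small_zero:
  assumes k: "k < m" and x: "x \<in> carrier (Obj U k)"
  shows "x = \<zero>\<^bsub>Obj U k\<^esub>"
proof -
  have sing: "A = B" if "A \<in> carrier (Wc.Q k)" "B \<in> carrier (Wc.Q k)" for A B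
  proof -
    have P1: "F = \<zero>\<^bsub>Wc.P k\<^esub>" if "F \<in> carrier (Wc.P k)" for F
    proof (rule Wc.P_eqI[OF that])
      show "\<zero>\<^bsub>Wc.P k\<^esub> \<in> carrier (Wc.P k)" using module.axioms(2)[OF Wc.P_module] abelian_groupE(2) by blast
      fix \<phi> assume "\<phi> \<in> fimor G m k"
      then show "F \<phi> = \<zero>\<^bsub>Wc.P k\<^esub> \<phi>" using fimor_empty[OF k, of G] by simp
    qed
    show ?thesis using that unfolding Wc.Q_carrier using P1 by auto
  qed
  have z: "\<zero>\<^bsub>Obj U k\<^esub> \<in> carrier (Obj U k)" using module.axioms(2)[OF UX.Xmod] abelian_groupE(2) by blast
  have "\<iota> k x = \<iota> k \<zero>\<^bsub>Obj U k\<^esub>" by (rule sing[OF linmapD(1)[OF \<iota>_lin x] linmapD(1)[OF \<iota>_lin z]])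
  then show ?thesis using \<iota>_inj[of k] x z by (auto simp: inj_on_def)
qed

lemma U_surj:
  assumes gd: "gen_deg R G TYPE('i) U m" and u: "u \<in> carrier (Obj U p)"
  shows "\<exists>H\<in>carrier (UX.M.P p). UX.eps p H = u"
proof -
  from gd obtain I :: "'i set" and nf \<eta> where nfle: "\<forall>i\<in>I. nf i \<le> m"
    and mor: "fig_morph R G (dsumfig R I (\<lambda>i. Mn R G (nf i))) U \<eta>"
    and sur: "\<forall>p. \<eta> p ` carrier (Obj (dsumfig R I (\<lambda>i. Mn R G (nf i))) p) = carrier (Obj U p)"
    unfolding gen_deg_def by blast
  let ?D = "dsumfig R I (\<lambda>i. Mn R G (nf i))"
  let ?O = "\<lambda>q i. Obj (Mn R G (nf i)) q"
  have ObjD: "Obj ?D q = dsum R I (?O q)" for q by (simp add: dsumfig_def)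
  have ActD: "Act ?D q r \<psi> F = (\<lambda>i. if i \<in> I then Act (Mn R G (nf i)) q r \<psi> (F i) else undefined)" for q r \<psi> F
    by (simp add: dsumfig_def)
  have Dc: "dsctx R I (?O q)" for q by (rule dsctx.intro[OF R Mn_module])
  have \<eta>lin: "linmap R (dsum R I (?O q)) (Obj U q) (\<eta> q)" for q
    using mor by (simp add: fig_morph_def ObjD)
  have \<eta>nat: "\<psi> \<in> fimor G q r \<Longrightarrow> F \<in> carrier (dsum R I (?O q)) \<Longrightarrow> \<eta> r (Act ?D q r \<psi> F) = Act U q r \<psi> (\<eta> q F)"
    for q r \<psi> F using mor by (simp add: fig_morph_def ObjD)
  let ?Im = "UX.eps p ` carrier (UX.M.P p)"
  have Imsub: "submodule ?Im R (Obj U p)" by (rule linmap_image_sub[OF UX.M.P_module UX.Xmod UX.eps_linmap])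
  have Im0: "\<zero>\<^bsub>Obj U p\<^esub> \<in> ?Im"
  proof (rule image_eqI)
    show "\<zero>\<^bsub>Obj U p\<^esub> = UX.eps p \<zero>\<^bsub>UX.M.P p\<^esub>" using linmap_zero[OF UX.M.P_module UX.Xmod UX.eps_linmap] by simp
    show "\<zero>\<^bsub>UX.M.P p\<^esub> \<in> carrier (UX.M.P p)" using module.axioms(2)[OF UX.M.P_module, THEN abelian_groupE(2)] .
  qed
  have claimA: "Act U k p \<phi> x \<in> ?Im" if k: "k \<le> m" and \<phi>: "\<phi> \<in> fimor G k p" and x: "x \<in> carrier (Obj U k)" for k \<phi> x
  proof (cases "k = m")
    case True
    have \<phi>': "\<phi> \<in> fimor G m p" and x': "x \<in> carrier (Obj U m)" using True \<phi> x by simp_all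
    have "Act U m p \<phi> x \<in> ?Im"
    proof (rule image_eqI)
      show "Act U m p \<phi> x = UX.eps p (UX.M.ds p \<phi> x)" using UX.eps_ds[OF \<phi>' x'] by simp
      show "UX.M.ds p \<phi> x \<in> carrier (UX.M.P p)" by (rule UX.M.ds_carrier[OF \<phi>' x'])
    qed
    then show ?thesis using True by simp
  next
    case False
    then have "x = \<zero>\<^bsub>Obj U k\<^esub>" using small_zero k x by simp
    then show ?thesis using linmap_zero[OF UX.Xmod UX.Xmod UX.Xlin[OF \<phi>]] Im0 by simp
  qed
  have gen: "\<eta> p (dsingle I (?O p) i A) \<in> ?Im" if i: "i \<in> I" and A: "A \<in> carrier (?O p i)" for i A
  proof -
    define k where "k = nf i"
    interpret Kk: mctx G R "kG R G k" k "kG_act R G k" by (rule kG_mctx)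
    have Oi: "?O q i = Kk.Q q" for q unfolding k_def[symmetric] Mn_def Kk.Obj_MW ..
    have L': "linmap R (Kk.P p) (Obj U p) (\<lambda>x. \<eta> p (dsingle I (?O p) i (Kk.c p x)))"
      using linmap_comp[OF linmap_comp[OF Kk.c_linmap dsctx.ds_linmap[OF Dc i, unfolded Oi]] \<eta>lin]
      by (simp add: comp_def)
    obtain x where x: "x \<in> carrier (Kk.P p)" and Ax: "A = Kk.c p x" using A unfolding Oi Kk.Q_carrier by blast
    have "(\<lambda>x. \<eta> p (dsingle I (?O p) i (Kk.c p x))) x \<in> ?Im"
    proof (rule Kk.P_lin_sub[OF UX.Xmod L' Imsub _ x])
      fix \<phi> w assume \<phi>: "\<phi> \<in> fimor G k p" and w: "w \<in> carrier (kG R G k)"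
      define B where "B = Kk.c k (Kk.ds k (fiid G k) w)"
      have Bc: "B \<in> carrier (?O k i)" unfolding Oi B_def by (rule Kk.c_closed[OF Kk.ds_carrier[OF fiid_mor w]])
      have cds: "Kk.c p (Kk.ds p \<phi> w) = Act (Mn R G (nf i)) k p \<phi> B"
        using Kk.c_ds_Act[OF \<phi> w] unfolding B_def k_def Mn_def by simp
      have Fd: "dsingle I (?O k) i B \<in> carrier (dsum R I (?O k))" by (rule dsctx.ds_carrier[OF Dc i Bc])
      have sw: "dsingle I (?O p) i (Act (Mn R G (nf i)) k p \<phi> B) = Act ?D k p \<phi> (dsingle I (?O k) i B)"
      proof
        fix j show "dsingle I (?O p) i (Act (Mn R G (nf i)) k p \<phi> B) j = Act ?D k p \<phi> (dsingle I (?O k) i B) j"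
          using linmap_zero[OF Mn_module Mn_module Mn_Act_linmap[OF \<phi>]]
          by (simp add: ActD dsingle_def)
      qed
      have uk: "\<eta> k (dsingle I (?O k) i B) \<in> carrier (Obj U k)" using linmapD(1)[OF \<eta>lin Fd] .
      show "\<eta> p (dsingle I (?O p) i (Kk.c p (Kk.ds p \<phi> w))) \<in> ?Im"
        unfolding cds sw \<eta>nat[OF \<phi> Fd] using claimA[OF _ \<phi> uk] nfle i k_def by simp
    qed
    then show ?thesis using Ax by simp
  qed
  have "u \<in> \<eta> p ` carrier (Obj ?D p)" using sur u by simp
  then obtain F where F0: "F \<in> carrier (Obj ?D p)" and uF: "u = \<eta> p F" by blast
  have F: "F \<in> carrier (dsum R I (?O p))" using F0 by (simp add: ObjD)
  have "\<eta> p F \<in> ?Im" by (rule dsctx.D_lin_sub[OF Dc UX.Xmod \<eta>lin Imsub gen F])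
  then obtain H where "H \<in> carrier (UX.M.P p)" "\<eta> p F = UX.eps p H" by (rule imageE) 
  then show ?thesis using uF by auto
qed

end

theorem final:
  fixes R :: "'k ring" and G :: "'g monoid" and m :: nat
    and W :: "('k, 'w) module" and \<rho> :: "'g fimor \<Rightarrow> 'w \<Rightarrow> 'w"
    and U :: "('k, 'g, 'u) figmod" and V :: "('k, 'g, 'v) figmod"
    and \<iota> :: "nat \<Rightarrow> 'u \<Rightarrow> ('g fimor \<Rightarrow> 'w) set"
    and \<pi> :: "nat \<Rightarrow> ('g fimor \<Rightarrow> 'w) set \<Rightarrow> 'v"
  assumes "cring R" and "group G"
    and "grp_mod R G m W \<rho>"
    and "fig_module R G U" and "fig_module R G V"
    and "short_exact R G U (MW R G m W \<rho>) V \<iota> \<pi>"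
    and "gen_deg R G TYPE('i) U m"
  shows "rel_proj R G TYPE('u) U \<and> rel_proj R G TYPE('v) V"
proof -
  interpret fgrp G by (rule fgrp.intro[OF assms(2)])
  interpret mainctx G R m W \<rho> U V \<iota> \<pi>
    by (rule mainctx.intro[OF fgrp_axioms mainctx_axioms.intro[OF assms(1) assms(3-6)]])
  have Us: "\<And>p u. u \<in> carrier (Obj U p) \<Longrightarrow> \<exists>H\<in>carrier (UX.M.P p). UX.eps p H = u"
    using U_surj[OF assms(7)] by blast
  have "rel_proj R G TYPE('u) U" by (rule UX.iso[OF Us U_inj])
  moreover have "rel_proj R G TYPE('v) V" by (rule VX.iso[OF V_surj V_inj[OF Us]])
  ultimately show ?thesis by blast
qed


theorem mainTheorem15:
  fixes R :: "'k ring" and G :: "'g monoid" and m :: nat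
    and W :: "('k, 'w) module" and \<rho> :: "'g fimor \<Rightarrow> 'w \<Rightarrow> 'w"
    and U :: "('k, 'g, 'u) figmod" and V :: "('k, 'g, 'v) figmod"
    and \<iota> :: "nat \<Rightarrow> 'u \<Rightarrow> ('g fimor \<Rightarrow> 'w) set"
    and \<pi> :: "nat \<Rightarrow> ('g fimor \<Rightarrow> 'w) set \<Rightarrow> 'v"
  assumes "cring R" and "group G"
    and "grp_mod R G m W \<rho>"
    and "fig_module R G U" and "fig_module R G V"
    and "short_exact R G U (MW R G m W \<rho>) V \<iota> \<pi>"
    and "gen_deg R G TYPE('i) U m"
  shows "rel_proj R G TYPE('u) U \<and> rel_proj R G TYPE('v) V"
  by (rule final[OF assms])

end
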